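(* Let $R_1,R_2$ be discrete valuation domains with maximal ideals $P_1=R_1p_1$ and $P_2=R_2p_2$, let $\overline{R}$ be a field, $\mathcal{V}_i:R_i\to\overline{R}$ surjective ring homomorphisms with $\ker\mathcal{V}_i=P_i$, and $R=\{(r_1,r_2)\in R_1\times R_2:\mathcal{V}_1(r_1)=\mathcal{V}_2(r_2)\}$. Let $M$ be a non-separated $R$-module and let $0\to K\xrightarrow{i}S\xrightarrow{\varphi}M\to0$ be a separated representation of $M$. Then $M$ is a pseudo-absorbing primary multiplication $R$-module if and only if $S$ is a pseudo-absorbing primary multiplication $R$-module.
   Context: $R$ is local with maximal ideal $P=P_1\oplus P_2=\{(a,b):a\in P_1,b\in P_2\}$. For an $R$-module $S$, $P_1S$ means $(P_1\oplus 0)S$ with $P_1\oplus0=\{(a,0):a\in P_1\}$, and $P_2S$ means $(0\oplus P_2)S$ with $0\oplus P_2=\{(0,b):b\in P_2\}$. An $R$-module $S$ is separated if $P_1S\cap P_2S=0$. A separated representation of an $R$-module $M$ is a surjective $R$-homomorphism $\varphi:S\to M$ with $S$ separated such that whenever $\varphi$ factors as $S\xrightarrow{f}S'\to M$ with $S'$ a separated $R$-module, $f$ is injective; $K=\ker\varphi$ and $i$ is the inclusion. A proper ideal $I$ of a commutative ring is 2-absorbing primary if whenever $abc\in I$ then $ab\in I$ or $ac\in\sqrt I$ or $bc\in\sqrt I$. A proper submodule $N$ of an $R$-module $M$ is pseudo-absorbing primary if $(N:_RM)=\{r\in R:rM\subseteq N\}$ is a 2-absorbing primary ideal of $R$. $M$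 is a pseudo-absorbing primary multiplication module if for every pseudo-absorbing primary submodule $N$ of $M$ there is an ideal $I$ of $R$ with $N=IM$. *)

theory Defs
  imports "HOL-Algebra.Algebra"
begin

(* Discrete valuation domain with maximal ideal P: a local principal ideal domain
   (unique maximal ideal P) that is not a field (P \<noteq> 0). *)
definition dvr :: "('a, 'm) ring_scheme \<Rightarrow> 'a set \<Rightarrow> bool" where
  "dvr R P \<longleftrightarrow> principal_domain R \<and> maximalideal P R \<and>
     (\<forall>I. maximalideal I R \<longrightarrow> I = P) \<and> P \<noteq> {\<zero>\<^bsub>R\<^esub>}"

definition pullback_ring ::
  "('a, 'm) ring_scheme \<Rightarrow> ('b, 'n) ring_scheme \<Rightarrow> ('a \<Rightarrow> 'c) \<Rightarrow> ('b \<Rightarrow> 'c) \<Rightarrow> ('a \<times> 'b) ring" where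
  "pullback_ring R1 R2 V1 V2 = (RDirProd R1 R2)
     \<lparr>carrier := {(r1, r2). r1 \<in> carrier R1 \<and> r2 \<in> carrier R2 \<and> V1 r1 = V2 r2}\<rparr>"

definition mod_hom ::
  "('r, 'x) ring_scheme \<Rightarrow> ('r, 's, 'u) module_scheme \<Rightarrow> ('r, 't, 'v) module_scheme \<Rightarrow> ('s \<Rightarrow> 't) \<Rightarrow> bool" where
  "mod_hom R S M f \<longleftrightarrow> f \<in> carrier S \<rightarrow> carrier M \<and>
     (\<forall>x\<in>carrier S. \<forall>y\<in>carrier S. f (x \<oplus>\<^bsub>S\<^esub> y) = f x \<oplus>\<^bsub>M\<^esub> f y) \<and>
     (\<forall>r\<in>carrier R. \<forall>x\<in>carrier S. f (r \<odot>\<^bsub>S\<^esub> x) = r \<odot>\<^bsub>M\<^esub> f x)"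

definition ideal_mod_prod ::
  "'r set \<Rightarrow> ('r, 'x) ring_scheme \<Rightarrow> ('r, 's, 'u) module_scheme \<Rightarrow> 's set" where
  "ideal_mod_prod I R M = \<Inter> {N. submodule N R M \<and> (\<forall>r\<in>I. \<forall>m\<in>carrier M. r \<odot>\<^bsub>M\<^esub> m \<in> N)}"

definition separated ::
  "('a \<times> 'b) ring \<Rightarrow> ('a, 'm) ring_scheme \<Rightarrow> ('b, 'n) ring_scheme \<Rightarrow> 'a set \<Rightarrow> 'b set
     \<Rightarrow> ('a \<times> 'b, 's) module \<Rightarrow> bool" where
  "separated R R1 R2 P1 P2 S \<longleftrightarrow>
     ideal_mod_prod {(a, \<zero>\<^bsub>R2\<^esub>) | a. a \<in> P1} R S \<inter> ideal_mod_prod {(\<zero>\<^bsub>R1\<^esub>, b) | b. b \<in> P2} R S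
       = {\<zero>\<^bsub>S\<^esub>}"

(* separated representation \<phi> : S \<rightarrow> M.  The competing separated modules S' range over
   modules with carrier in the same type as S. *)
definition sep_rep ::
  "('a \<times> 'b) ring \<Rightarrow> ('a, 'm) ring_scheme \<Rightarrow> ('b, 'n) ring_scheme \<Rightarrow> 'a set \<Rightarrow> 'b set
     \<Rightarrow> ('a \<times> 'b, 's) module \<Rightarrow> ('a \<times> 'b, 't) module \<Rightarrow> ('s \<Rightarrow> 't) \<Rightarrow> bool" where
  "sep_rep R R1 R2 P1 P2 S M \<phi> \<longleftrightarrow>
     module R S \<and> separated R R1 R2 P1 P2 S \<and> mod_hom R S M \<phi> \<and> \<phi> ` carrier S = carrier M \<and>
     (\<forall>(S' :: ('a \<times> 'b, 's) module) f g.
        module R S' \<and> separated R R1 R2 P1 P2 S' \<and> mod_hom R S S' f \<and> mod_hom R S' M g \<and>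
        (\<forall>s\<in>carrier S. g (f s) = \<phi> s) \<longrightarrow> inj_on f (carrier S))"

definition rad :: "('a, 'm) ring_scheme \<Rightarrow> 'a set \<Rightarrow> 'a set" where
  "rad R I = {a \<in> carrier R. \<exists>n::nat. a [^]\<^bsub>R\<^esub> n \<in> I}"

definition two_absorbing_primary :: "('a, 'm) ring_scheme \<Rightarrow> 'a set \<Rightarrow> bool" where
  "two_absorbing_primary R I \<longleftrightarrow> ideal I R \<and> I \<noteq> carrier R \<and>
     (\<forall>a\<in>carrier R. \<forall>b\<in>carrier R. \<forall>c\<in>carrier R.
        a \<otimes>\<^bsub>R\<^esub> b \<otimes>\<^bsub>R\<^esub> c \<in> I \<longrightarrow>
        a \<otimes>\<^bsub>R\<^esub> b \<in> I \<or> a \<otimes>\<^bsub>R\<^esub> c \<in> rad R I \<or> b \<otimes>\<^bsub>R\<^esub> c \<in> rad R I)"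

definition mod_colon ::
  "('r, 'x) ring_scheme \<Rightarrow> 's set \<Rightarrow> ('r, 's, 'u) module_scheme \<Rightarrow> 'r set" where
  "mod_colon R N M = {r \<in> carrier R. \<forall>m\<in>carrier M. r \<odot>\<^bsub>M\<^esub> m \<in> N}"

definition pseudo_absorbing_primary ::
  "('r, 'x) ring_scheme \<Rightarrow> ('r, 's, 'u) module_scheme \<Rightarrow> 's set \<Rightarrow> bool" where
  "pseudo_absorbing_primary R M N \<longleftrightarrow> submodule N R M \<and> N \<noteq> carrier M \<and>
     two_absorbing_primary R (mod_colon R N M)"

definition pap_multiplication_module ::
  "('r, 'x) ring_scheme \<Rightarrow> ('r, 's, 'u) module_scheme \<Rightarrow> bool" where
  "pap_multiplication_module R M \<longleftrightarrow>
     (\<forall>N. pseudo_absorbing_primary R M N \<longrightarrow> (\<exists>I. ideal I R \<and> N = ideal_mod_prod I R M))"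

end

theory Submission
  imports Defs
begin
context module begin

lemma imp_gen: "r \<in> I \<Longrightarrow> m \<in> carrier M \<Longrightarrow> r \<odot>\<^bsub>M\<^esub> m \<in> ideal_mod_prod I R M"
  unfolding ideal_mod_prod_def by auto

lemma imp_min: "submodule N R M \<Longrightarrow> (\<And>r m. r \<in> I \<Longrightarrow> m \<in> carrier M \<Longrightarrow> r \<odot>\<^bsub>M\<^esub> m \<in> N)
   \<Longrightarrow> ideal_mod_prod I R M \<subseteq> N"
  unfolding ideal_mod_prod_def by auto

lemma imp_sub: assumes "I \<subseteq> carrier R" shows "submodule (ideal_mod_prod I R M) R M"
proof -
  let ?F = "{N. submodule N R M \<and> (\<forall>r\<in>I. \<forall>m\<in>carrier M. r \<odot>\<^bsub>M\<^esub> m \<in> N)}"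
  have cF: "carrier M \<in> ?F" using carrier_is_submodule assms by auto
  have X: "ideal_mod_prod I R M = \<Inter>?F" unfolding ideal_mod_prod_def by simp
  show ?thesis unfolding X
  proof (rule submoduleI)
    show "\<Inter>?F \<subseteq> carrier M" using cF by auto
    show "\<zero>\<^bsub>M\<^esub> \<in> \<Inter>?F" using submodule.axioms(1) subgroup.one_closed by fastforce
    show "\<ominus>\<^bsub>M\<^esub> a \<in> \<Inter>?F" if "a \<in> \<Inter>?F" for a using that submoduleE(3) by blast
    show "a \<oplus>\<^bsub>M\<^esub> b \<in> \<Inter>?F" if "a \<in> \<Inter>?F" "b \<in> \<Inter>?F" for a b using that submoduleE(5) by blast
    show "a \<odot>\<^bsub>M\<^esub> x \<in> \<Inter>?F" if "a \<in> carrier R" "x \<in> \<Inter>?F" for a x using that submoduleE(4) by blast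
  qed
qed

lemma imp_mono: "I \<subseteq> J \<Longrightarrow> J \<subseteq> carrier R \<Longrightarrow> ideal_mod_prod I R M \<subseteq> ideal_mod_prod J R M"
  by (rule imp_min[OF imp_sub]) (auto intro: imp_gen)

lemma imp_carrier: "I \<subseteq> carrier R \<Longrightarrow> ideal_mod_prod I R M \<subseteq> carrier M"
  using imp_sub submoduleE(1) by blast

lemma imp_zero: "I \<subseteq> carrier R \<Longrightarrow> \<zero>\<^bsub>M\<^esub> \<in> ideal_mod_prod I R M"
  using imp_sub submoduleE(2) by (metis submodule.axioms(1) subgroup.one_closed monoid.simps(2))

end

context module begin

context fixes L assumes Lsub: "submodule L R M" begin

lemma L_sub: "L \<subseteq> carrier M" using Lsub submoduleE(1) by blast
lemma L_zero: "\<zero>\<^bsub>M\<^esub> \<in> L" using Lsub by (metis submodule.axioms(1) subgroup.one_closed monoid.simps(2))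
lemma L_add: "a \<in> L \<Longrightarrow> b \<in> L \<Longrightarrow> a \<oplus>\<^bsub>M\<^esub> b \<in> L" using Lsub submoduleE(5) by blast
lemma L_neg: "a \<in> L \<Longrightarrow> \<ominus>\<^bsub>M\<^esub> a \<in> L" using Lsub submoduleE(3) by blast
lemma L_smult: "r \<in> carrier R \<Longrightarrow> a \<in> L \<Longrightarrow> r \<odot>\<^bsub>M\<^esub> a \<in> L" using Lsub submoduleE(4) by blast
lemma L_minus: "a \<in> L \<Longrightarrow> b \<in> L \<Longrightarrow> a \<ominus>\<^bsub>M\<^esub> b \<in> L"
  unfolding a_minus_def using L_add L_neg by blast

lemma E_refl: "x \<in> carrier M \<Longrightarrow> x \<ominus>\<^bsub>M\<^esub> x \<in> L"
  using L_zero by (simp add: M.r_neg a_minus_def)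

lemma E_sym: assumes "x \<in> carrier M" "y \<in> carrier M" "x \<ominus>\<^bsub>M\<^esub> y \<in> L" shows "y \<ominus>\<^bsub>M\<^esub> x \<in> L"
proof -
  have "\<ominus>\<^bsub>M\<^esub> (x \<ominus>\<^bsub>M\<^esub> y) = y \<ominus>\<^bsub>M\<^esub> x"
    using assms by (simp add: a_minus_def M.minus_add M.add.m_comm)
  thus ?thesis using L_neg assms by metis
qed

lemma E_trans: assumes "x \<in> carrier M" "y \<in> carrier M" "z \<in> carrier M"
  "x \<ominus>\<^bsub>M\<^esub> y \<in> L" "y \<ominus>\<^bsub>M\<^esub> z \<in> L" shows "x \<ominus>\<^bsub>M\<^esub> z \<in> L"
proof -
  have "(x \<ominus>\<^bsub>M\<^esub> y) \<oplus>\<^bsub>M\<^esub> (y \<ominus>\<^bsub>M\<^esub> z) = x \<ominus>\<^bsub>M\<^esub> z"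
    using assms unfolding a_minus_def by (metis M.add.m_assoc M.add.m_closed M.add.inv_closed M.l_neg M.l_zero)
  thus ?thesis using L_add assms by metis
qed

lemma E_add: assumes "x \<in> carrier M" "y \<in> carrier M" "x' \<in> carrier M" "y' \<in> carrier M"
  "x \<ominus>\<^bsub>M\<^esub> x' \<in> L" "y \<ominus>\<^bsub>M\<^esub> y' \<in> L" shows "(x \<oplus>\<^bsub>M\<^esub> y) \<ominus>\<^bsub>M\<^esub> (x' \<oplus>\<^bsub>M\<^esub> y') \<in> L"
proof -
  have "(x \<ominus>\<^bsub>M\<^esub> x') \<oplus>\<^bsub>M\<^esub> (y \<ominus>\<^bsub>M\<^esub> y') = (x \<oplus>\<^bsub>M\<^esub> y) \<ominus>\<^bsub>M\<^esub> (x' \<oplus>\<^bsub>M\<^esub> y')"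
    using assms by (simp add: a_minus_def M.minus_add M.a_ac)
  thus ?thesis using L_add assms by metis
qed

lemma E_smult: assumes "r \<in> carrier R" "x \<in> carrier M" "x' \<in> carrier M"
  "x \<ominus>\<^bsub>M\<^esub> x' \<in> L" shows "(r \<odot>\<^bsub>M\<^esub> x) \<ominus>\<^bsub>M\<^esub> (r \<odot>\<^bsub>M\<^esub> x') \<in> L"
proof -
  have "r \<odot>\<^bsub>M\<^esub> (x \<ominus>\<^bsub>M\<^esub> x') = (r \<odot>\<^bsub>M\<^esub> x) \<ominus>\<^bsub>M\<^esub> (r \<odot>\<^bsub>M\<^esub> x')"
    using assms by (simp add: a_minus_def smult_r_distr smult_r_minus)
  thus ?thesis using L_smult assms by metis
qed

definition rep :: "'c \<Rightarrow> 'c" where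
  "rep x = (SOME y. y \<in> {z \<in> carrier M. x \<ominus>\<^bsub>M\<^esub> z \<in> L})"

lemma rep_in: assumes "x \<in> carrier M" shows "rep x \<in> carrier M" "x \<ominus>\<^bsub>M\<^esub> rep x \<in> L"
proof -
  have "x \<in> {z \<in> carrier M. x \<ominus>\<^bsub>M\<^esub> z \<in> L}" using assms E_refl by auto
  hence "rep x \<in> {z \<in> carrier M. x \<ominus>\<^bsub>M\<^esub> z \<in> L}" unfolding rep_def by (rule someI)
  thus "rep x \<in> carrier M" "x \<ominus>\<^bsub>M\<^esub> rep x \<in> L" by auto
qed

lemma rep_eq_iff: assumes "x \<in> carrier M" "y \<in> carrier M"
  shows "rep x = rep y \<longleftrightarrow> x \<ominus>\<^bsub>M\<^esub> y \<in> L"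
proof
  assume "rep x = rep y"
  then show "x \<ominus>\<^bsub>M\<^esub> y \<in> L" using rep_in[OF assms(1)] rep_in[OF assms(2)]
    E_sym E_trans assms by metis
next
  assume xy: "x \<ominus>\<^bsub>M\<^esub> y \<in> L"
  have "{z \<in> carrier M. x \<ominus>\<^bsub>M\<^esub> z \<in> L} = {z \<in> carrier M. y \<ominus>\<^bsub>M\<^esub> z \<in> L}"
    using xy assms E_sym E_trans by blast
  thus "rep x = rep y" unfolding rep_def by simp
qed

lemma rep_rep: "x \<in> carrier M \<Longrightarrow> rep (rep x) = rep x"
  using rep_in rep_eq_iff E_sym by metis

lemma rep_add: "x \<in> carrier M \<Longrightarrow> y \<in> carrier M \<Longrightarrow>
   rep (rep x \<oplus>\<^bsub>M\<^esub> rep y) = rep (x \<oplus>\<^bsub>M\<^esub> y)"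
  using rep_in rep_eq_iff E_sym E_add by (metis M.add.m_closed)

lemma rep_smult: "r \<in> carrier R \<Longrightarrow> x \<in> carrier M \<Longrightarrow>
   rep (r \<odot>\<^bsub>M\<^esub> rep x) = rep (r \<odot>\<^bsub>M\<^esub> x)"
  using rep_in rep_eq_iff E_sym E_smult by (metis smult_closed)

lemma rep_zero_iff: "x \<in> carrier M \<Longrightarrow> rep x = rep \<zero>\<^bsub>M\<^esub> \<longleftrightarrow> x \<in> L"
proof -
  have z: "\<ominus>\<^bsub>M\<^esub> \<zero>\<^bsub>M\<^esub> = \<zero>\<^bsub>M\<^esub>" by (metis M.l_neg M.r_zero M.zero_closed M.add.inv_closed)
  assume "x \<in> carrier M" thus ?thesis using rep_eq_iff[of x "\<zero>\<^bsub>M\<^esub>"] by (simp add: a_minus_def z M.r_zero)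
qed

definition Q where "Q = M\<lparr>carrier := rep ` carrier M, zero := rep \<zero>\<^bsub>M\<^esub>,
   add := (\<lambda>a b. rep (a \<oplus>\<^bsub>M\<^esub> b)), smult := (\<lambda>r a. rep (r \<odot>\<^bsub>M\<^esub> a))\<rparr>"

lemma Q_simps: "carrier Q = rep ` carrier M" "\<zero>\<^bsub>Q\<^esub> = rep \<zero>\<^bsub>M\<^esub>"
  "(\<oplus>\<^bsub>Q\<^esub>) = (\<lambda>a b. rep (a \<oplus>\<^bsub>M\<^esub> b))" "(\<odot>\<^bsub>Q\<^esub>) = (\<lambda>r a. rep (r \<odot>\<^bsub>M\<^esub> a))"
  unfolding Q_def by simp_all

lemma Q_abelian: "abelian_group Q"
proof (rule abelian_groupI)
  fix x y z assume x: "x \<in> carrier Q" and y: "y \<in> carrier Q" and z: "z \<in> carrier Q"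
  from x obtain a where a: "a \<in> carrier M" "x = rep a" by (auto simp: Q_simps)
  from y obtain b where b: "b \<in> carrier M" "y = rep b" by (auto simp: Q_simps)
  from z obtain c where c: "c \<in> carrier M" "z = rep c" by (auto simp: Q_simps)
  show "x \<oplus>\<^bsub>Q\<^esub> y \<in> carrier Q" using a b rep_in by (auto simp: Q_simps)
  show "x \<oplus>\<^bsub>Q\<^esub> y \<oplus>\<^bsub>Q\<^esub> z = x \<oplus>\<^bsub>Q\<^esub> (y \<oplus>\<^bsub>Q\<^esub> z)"
    using a b c by (simp add: Q_simps rep_add rep_rep M.add.m_assoc)
  show "x \<oplus>\<^bsub>Q\<^esub> y = y \<oplus>\<^bsub>Q\<^esub> x"
    using a b rep_in by (simp add: Q_simps M.add.m_comm)
  show "\<zero>\<^bsub>Q\<^esub> \<oplus>\<^bsub>Q\<^esub> x = x"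
    using a by (simp add: Q_simps rep_add rep_rep)
  show "\<exists>y\<in>carrier Q. y \<oplus>\<^bsub>Q\<^esub> x = \<zero>\<^bsub>Q\<^esub>"
  proof (intro bexI)
    show "rep (\<ominus>\<^bsub>M\<^esub> a) \<in> carrier Q" using a by (simp add: Q_simps)
    show "rep (\<ominus>\<^bsub>M\<^esub> a) \<oplus>\<^bsub>Q\<^esub> x = \<zero>\<^bsub>Q\<^esub>"
      using a by (simp add: Q_simps rep_add M.l_neg)
  qed
next
  show "\<zero>\<^bsub>Q\<^esub> \<in> carrier Q" by (simp add: Q_simps)
qed

lemma Q_module: "module R Q"
proof (rule moduleI)
  show "cring R" by (rule is_cring)
  show "abelian_group Q" by (rule Q_abelian)
  show "\<one>\<^bsub>R\<^esub> \<odot>\<^bsub>Q\<^esub> x = x" if x: "x \<in> carrier Q" for x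
  proof -
    from x obtain u where u: "u \<in> carrier M" "x = rep u" by (auto simp: Q_simps)
    thus ?thesis by (simp add: Q_simps rep_smult rep_rep)
  qed
  fix a b x y assume a: "a \<in> carrier R" and b: "b \<in> carrier R" and x: "x \<in> carrier Q" and y: "y \<in> carrier Q"
  from x obtain u where u: "u \<in> carrier M" "x = rep u" by (auto simp: Q_simps)
  from y obtain v where v: "v \<in> carrier M" "y = rep v" by (auto simp: Q_simps)
  show "a \<odot>\<^bsub>Q\<^esub> x \<in> carrier Q" using a u rep_in by (simp add: Q_simps)
  show "(a \<oplus>\<^bsub>R\<^esub> b) \<odot>\<^bsub>Q\<^esub> x = a \<odot>\<^bsub>Q\<^esub> x \<oplus>\<^bsub>Q\<^esub> b \<odot>\<^bsub>Q\<^esub> x"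
    using a b u by (simp add: Q_simps rep_add rep_smult smult_l_distr)
  show "a \<odot>\<^bsub>Q\<^esub> (x \<oplus>\<^bsub>Q\<^esub> y) = a \<odot>\<^bsub>Q\<^esub> x \<oplus>\<^bsub>Q\<^esub> a \<odot>\<^bsub>Q\<^esub> y"
    using a u v by (simp add: Q_simps rep_add rep_smult smult_r_distr)
  show "(a \<otimes>\<^bsub>R\<^esub> b) \<odot>\<^bsub>Q\<^esub> x = a \<odot>\<^bsub>Q\<^esub> (b \<odot>\<^bsub>Q\<^esub> x)"
    using a b u by (simp add: Q_simps rep_smult smult_assoc1)
qed


lemma rep_hom: "mod_hom R M Q rep"
  unfolding mod_hom_def using rep_in by (auto simp: Q_simps rep_add rep_smult)

lemma rep_image_sub: assumes A: "submodule A R M" shows "submodule (rep ` A) R Q"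
proof -
  interpret Qm: module R Q by (rule Q_module)
  have Asub: "A \<subseteq> carrier M" using A submoduleE(1) by blast
  show ?thesis
  proof (rule Qm.submoduleI)
    show "rep ` A \<subseteq> carrier Q" using Asub by (auto simp: Q_simps)
    show "\<zero>\<^bsub>Q\<^esub> \<in> rep ` A" using A by (simp add: Q_simps)
        (metis submodule.axioms(1) subgroup.one_closed monoid.simps(2) imageI)
    fix a b assume a: "a \<in> rep ` A" and b: "b \<in> rep ` A"
    from a obtain u where u: "u \<in> A" "a = rep u" by auto
    from b obtain v where v: "v \<in> A" "b = rep v" by auto
    have uc: "u \<in> carrier M" "v \<in> carrier M" using u v Asub by auto
    have "\<ominus>\<^bsub>Q\<^esub> a = rep (\<ominus>\<^bsub>M\<^esub> u)"
    proof (rule Qm.minus_equality)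
      show "rep (\<ominus>\<^bsub>M\<^esub> u) \<oplus>\<^bsub>Q\<^esub> a = \<zero>\<^bsub>Q\<^esub>" using uc u by (simp add: Q_simps rep_add M.l_neg)
      show "a \<in> carrier Q" using uc u by (simp add: Q_simps)
      show "rep (\<ominus>\<^bsub>M\<^esub> u) \<in> carrier Q" using uc by (simp add: Q_simps)
    qed
    thus "\<ominus>\<^bsub>Q\<^esub> a \<in> rep ` A" using u A submoduleE(3) by blast
    show "a \<oplus>\<^bsub>Q\<^esub> b \<in> rep ` A" using u v uc A submoduleE(5) by (simp add: Q_simps rep_add)
  next
    fix r a assume r: "r \<in> carrier R" and a: "a \<in> rep ` A"
    from a obtain u where u: "u \<in> A" "a = rep u" by auto
    have uc: "u \<in> carrier M" using u Asub by auto
    show "r \<odot>\<^bsub>Q\<^esub> a \<in> rep ` A" using u uc r A submoduleE(4) by (simp add: Q_simps rep_smult)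
  qed
qed

lemma imp_Q: assumes I: "I \<subseteq> carrier R"
  shows "ideal_mod_prod I R Q \<subseteq> rep ` (ideal_mod_prod I R M)"
proof -
  interpret Qm: module R Q by (rule Q_module)
  show ?thesis
  proof (rule Qm.imp_min)
    show "submodule (rep ` ideal_mod_prod I R M) R Q" by (rule rep_image_sub[OF imp_sub[OF I]])
    fix r m assume r: "r \<in> I" and m: "m \<in> carrier Q"
    from m obtain u where u: "u \<in> carrier M" "m = rep u" by (auto simp: Q_simps)
    have "r \<odot>\<^bsub>Q\<^esub> m = rep (r \<odot>\<^bsub>M\<^esub> u)" using u r I by (auto simp: Q_simps rep_smult)
    thus "r \<odot>\<^bsub>Q\<^esub> m \<in> rep ` ideal_mod_prod I R M" using imp_gen[OF r u(1)] by simp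
  qed
qed

lemma phi_rep: assumes N: "module R N" and phi: "mod_hom R M N phi"
  and ker: "\<And>l. l \<in> L \<Longrightarrow> phi l = \<zero>\<^bsub>N\<^esub>" and x: "x \<in> carrier M"
  shows "phi (rep x) = phi x"
proof -
  interpret Nm: module R N by (rule N)
  have r: "rep x \<in> carrier M" "x \<ominus>\<^bsub>M\<^esub> rep x \<in> L" using rep_in x by auto
  have "x = (x \<ominus>\<^bsub>M\<^esub> rep x) \<oplus>\<^bsub>M\<^esub> rep x" using r x unfolding a_minus_def
    by (metis M.add.m_assoc M.add.inv_closed M.l_neg M.r_zero)
  hence "phi x = phi (x \<ominus>\<^bsub>M\<^esub> rep x) \<oplus>\<^bsub>N\<^esub> phi (rep x)"
    using phi r x unfolding mod_hom_def by (metis L_sub subsetD)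
  also have "\<dots> = phi (rep x)" using ker[OF r(2)] phi r unfolding mod_hom_def
    by (simp add: Pi_iff Nm.l_zero)
  finally show ?thesis by simp
qed

lemma phi_Q_hom: assumes N: "module R N" and phi: "mod_hom R M N phi"
  and ker: "\<And>l. l \<in> L \<Longrightarrow> phi l = \<zero>\<^bsub>N\<^esub>"
  shows "mod_hom R Q N phi"
proof -
  have pr: "\<And>x. x \<in> carrier M \<Longrightarrow> phi (rep x) = phi x" using phi_rep[OF N phi ker] by blast
  show ?thesis using phi unfolding mod_hom_def
    by (auto simp: Q_simps pr rep_in)
qed

end
end

lemma sep_rep_quot:
  fixes R :: "('a \<times> 'b) ring" and S :: "('a \<times> 'b, 's) module" and M :: "('a \<times> 'b, 't) module"
    and R1 :: "('a, 'm) ring_scheme" and R2 :: "('b, 'n) ring_scheme"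
  assumes rep: "sep_rep R R1 R2 P1 P2 S M phi" and Mm: "module R M"
    and I1: "{(a, \<zero>\<^bsub>R2\<^esub>) | a. a \<in> P1} \<subseteq> carrier R"
    and I2: "{(\<zero>\<^bsub>R1\<^esub>, b) | b. b \<in> P2} \<subseteq> carrier R"
    and L: "submodule L R S" and ker: "\<And>l. l \<in> L \<Longrightarrow> phi l = \<zero>\<^bsub>M\<^esub>"
    and H: "\<And>a1 a2. a1 \<in> ideal_mod_prod {(a, \<zero>\<^bsub>R2\<^esub>) | a. a \<in> P1} R S \<Longrightarrow>
       a2 \<in> ideal_mod_prod {(\<zero>\<^bsub>R1\<^esub>, b) | b. b \<in> P2} R S \<Longrightarrow> a1 \<ominus>\<^bsub>S\<^esub> a2 \<in> L \<Longrightarrow> a1 \<in> L"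
  shows "L = {\<zero>\<^bsub>S\<^esub>}"
proof -
  have Sm: "module R S" using rep unfolding sep_rep_def by blast
  interpret Sm: module R S by (rule Sm)
  interpret Qm: module R "Sm.Q L" by (rule Sm.Q_module[OF L])
  let ?I1 = "{(a, \<zero>\<^bsub>R2\<^esub>) | a. a \<in> P1}"
  let ?I2 = "{(\<zero>\<^bsub>R1\<^esub>, b) | b. b \<in> P2}"
  have sep: "separated R R1 R2 P1 P2 (Sm.Q L)"
    unfolding separated_def
  proof
    show "ideal_mod_prod ?I1 R (Sm.Q L) \<inter> ideal_mod_prod ?I2 R (Sm.Q L) \<subseteq> {\<zero>\<^bsub>Sm.Q L\<^esub>}"
    proof
      fix y assume y: "y \<in> ideal_mod_prod ?I1 R (Sm.Q L) \<inter> ideal_mod_prod ?I2 R (Sm.Q L)"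
      obtain a1 where a1: "a1 \<in> ideal_mod_prod ?I1 R S" "y = Sm.rep L a1"
        using y Sm.imp_Q[OF L I1] by blast
      obtain a2 where a2: "a2 \<in> ideal_mod_prod ?I2 R S" "y = Sm.rep L a2"
        using y Sm.imp_Q[OF L I2] by blast
      have c: "a1 \<in> carrier S" "a2 \<in> carrier S" using a1 a2 Sm.imp_carrier I1 I2 by blast+
      have "a1 \<ominus>\<^bsub>S\<^esub> a2 \<in> L" using Sm.rep_eq_iff[OF L c] a1 a2 by simp
      hence "a1 \<in> L" using H a1 a2 by blast
      hence "y = Sm.rep L \<zero>\<^bsub>S\<^esub>" using Sm.rep_zero_iff[OF L c(1)] a1 by simp
      thus "y \<in> {\<zero>\<^bsub>Sm.Q L\<^esub>}" by (simp add: Sm.Q_simps[OF L])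
    qed
    show "{\<zero>\<^bsub>Sm.Q L\<^esub>} \<subseteq> ideal_mod_prod ?I1 R (Sm.Q L) \<inter> ideal_mod_prod ?I2 R (Sm.Q L)"
      using Qm.imp_zero I1 I2 by blast
  qed
  have h1: "mod_hom R S (Sm.Q L) (Sm.rep L)" by (rule Sm.rep_hom[OF L])
  have hom: "mod_hom R S M phi" using rep unfolding sep_rep_def by blast
  have h2: "mod_hom R (Sm.Q L) M phi" using Sm.phi_Q_hom[OF L Mm hom ker] .
  have h3: "\<forall>s\<in>carrier S. phi (Sm.rep L s) = phi s" using Sm.phi_rep[OF L Mm hom ker] by blast
  have "inj_on (Sm.rep L) (carrier S)"
    using rep unfolding sep_rep_def
    apply (elim conjE allE[of _ "Sm.Q L"] allE[of _ "Sm.rep L"] allE[of _ phi])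
    using Sm.Q_module[OF L] sep h1 h2 h3 by blast
  moreover have "Sm.rep L l = Sm.rep L \<zero>\<^bsub>S\<^esub>" if "l \<in> L" for l
    using Sm.rep_zero_iff[OF L] that Sm.L_sub[OF L] by blast
  ultimately have "l = \<zero>\<^bsub>S\<^esub>" if "l \<in> L" for l
    using that Sm.L_sub[OF L] inj_onD by (metis Sm.zero_closed subsetD)
  thus ?thesis using Sm.L_zero[OF L] by blast
qed

lemma dvr_pd: "dvr R P \<Longrightarrow> principal_domain R" unfolding dvr_def by blast

lemma dvr_unit:
  fixes R :: "('a, 'm) ring_scheme" (structure)
  assumes d: "dvr R P" and x: "x \<in> carrier R" and nx: "x \<notin> P"
  shows "x \<in> Units R"
proof (rule ccontr)
  assume nu: "x \<notin> Units R"
  interpret principal_domain R using d unfolding dvr_def by blast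
  have mP: "maximalideal P R" and uq: "\<And>I. maximalideal I R \<Longrightarrow> I = P" using d unfolding dvr_def by auto
  have "\<zero> \<in> P" using mP by (simp add: additive_subgroup.zero_closed ideal.axioms(1) maximalideal.axioms(1))
  hence x0: "x \<noteq> \<zero>" using nx by auto
  obtain b where b: "b \<in> carrier R" "ring_irreducible b" "b divides x"
    using exists_irreducible_divisor[of x] x x0 nu by blast
  have "maximalideal (PIdl b) R" using irreducible_imp_maximalideal b by blast
  hence "PIdl b = P" using uq by blast
  moreover from b(3) obtain c where c: "c \<in> carrier R" "x = b \<otimes> c" unfolding factor_def by blast
  hence "x \<in> PIdl b" unfolding cgenideal_def using b(1) m_comm by blast
  ultimately show False using nx by simp
qed

lemma dvr_factor:
  fixes R :: "('a, 'm) ring_scheme" (structure)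
  assumes d: "dvr R P" and Pp: "P = PIdl\<^bsub>R\<^esub> p" and p: "p \<in> carrier R"
  shows "z \<in> carrier R \<Longrightarrow> z \<noteq> \<zero>\<^bsub>R\<^esub> \<Longrightarrow> \<exists>k u. u \<in> Units R \<and> z = p [^]\<^bsub>R\<^esub> (k::nat) \<otimes>\<^bsub>R\<^esub> u"
proof -
  interpret principal_domain R using d unfolding dvr_def by blast
  have mP: "maximalideal P R" using d unfolding dvr_def by auto
  have Pne: "P \<noteq> {\<zero>}" using d unfolding dvr_def by auto
  have p0: "p \<noteq> \<zero>" using Pne Pp p unfolding cgenideal_def by force
  have pnu: "p \<notin> Units R"
  proof
    assume "p \<in> Units R"
    hence "\<one> \<in> P" unfolding Pp cgenideal_def using p
      by (auto intro!: exI[of _ "inv p"] simp: Units_l_inv)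
    thus False using mP by (metis ideal.one_imp_carrier maximalideal.axioms(1) maximalideal.I_notcarr)
  qed
  let ?r = "{(x, y). x \<in> carrier (mult_of R) \<and> y \<in> carrier (mult_of R) \<and> properfactor (mult_of R) x y}"
  have wf: "wf ?r" by (rule mult_of.division_wellfounded)
  have "\<forall>z. z \<in> carrier R \<longrightarrow> z \<noteq> \<zero> \<longrightarrow> (\<exists>k u. u \<in> Units R \<and> z = p [^] (k::nat) \<otimes> u)" (is "\<forall>z. ?P z")
  proof (intro allI)
    fix z show "?P z"
    using wf
    proof (induction z rule: wf_induct_rule)
      case (less z)
      show ?case
      proof (intro impI)
        assume z: "z \<in> carrier R" "z \<noteq> \<zero>"
        show "\<exists>k u. u \<in> Units R \<and> z = p [^] (k::nat) \<otimes> u"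
        proof (cases "z \<in> Units R")
          case True thus ?thesis by (intro exI[of _ 0] exI[of _ z]) (simp add: z)
        next
          case False
          hence "z \<in> P" using dvr_unit[OF d z(1)] by blast
          then obtain c where c: "c \<in> carrier R" "z = c \<otimes> p" unfolding Pp cgenideal_def by blast
          have c0: "c \<noteq> \<zero>" using c z p by auto
          have "properfactor (mult_of R) c z"
            using mult_of.properfactorI3[of z c p] c c0 p p0 pnu by simp
          hence "(c, z) \<in> ?r" using c c0 z by simp
          then obtain k u where ku: "u \<in> Units R" "c = p [^] (k::nat) \<otimes> u"
            using less c c0 by blast
          have "z = p [^] (Suc k) \<otimes> u" using c ku p Units_closed[OF ku(1)]
            by (simp add: m_ac)
          thus ?thesis using ku by blast
        qed
      qed
    qed
  qed
  thus "z \<in> carrier R \<Longrightarrow> z \<noteq> \<zero>\<^bsub>R\<^esub> \<Longrightarrow> \<exists>k u. u \<in> Units R \<and> z = p [^]\<^bsub>R\<^esub> (k::nat) \<otimes>\<^bsub>R\<^esub> u" by blast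
qed

lemma dvr_F:
  fixes R :: "('a, 'm) ring_scheme" (structure)
  assumes d: "dvr R P" and Pp: "P = PIdl\<^bsub>R\<^esub> p" and p: "p \<in> carrier R"
    and z: "z \<in> carrier R" "z \<noteq> \<zero>\<^bsub>R\<^esub>" and y: "y \<in> P"
  shows "\<exists>n. \<forall>m\<ge>n. \<exists>w\<in>P. y [^]\<^bsub>R\<^esub> (m::nat) = z \<otimes>\<^bsub>R\<^esub> w"
proof -
  interpret principal_domain R using d unfolding dvr_def by blast
  obtain k u where ku: "u \<in> Units R" "z = p [^] (k::nat) \<otimes> u" using dvr_factor[OF d Pp p z] by blast
  obtain y' where y': "y' \<in> carrier R" "y = y' \<otimes> p" using y unfolding Pp cgenideal_def by blast
  have uc: "u \<in> carrier R" "inv u \<in> carrier R" using ku by auto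
  show ?thesis
  proof (intro exI[where x="Suc k"] allI impI)
    fix m assume m: "Suc k \<le> m"
    then obtain j where j: "m = k + Suc j" by (metis add_Suc_right le_iff_add plus_1_eq_Suc add.commute add_Suc)
    let ?w = "inv u \<otimes> (y' [^] m \<otimes> (p [^] j \<otimes> p))"
    have w: "?w \<in> P" unfolding Pp cgenideal_def using uc y' p by (auto intro!: exI[of _ "inv u \<otimes> (y' [^] m \<otimes> p [^] j)"] simp: m_ac)
    have "y [^] m = y' [^] m \<otimes> p [^] m" using y' p by (simp add: nat_pow_distrib)
    also have "p [^] m = p [^] k \<otimes> (p [^] j \<otimes> p)" using p j by (simp add: nat_pow_mult[symmetric] m_assoc)
    also have "y' [^] m \<otimes> (p [^] k \<otimes> (p [^] j \<otimes> p)) = (p [^] k \<otimes> u) \<otimes> ?w"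
    proof -
      have "(p [^] k \<otimes> u) \<otimes> ?w = p [^] k \<otimes> (u \<otimes> inv u) \<otimes> (y' [^] m \<otimes> (p [^] j \<otimes> p))"
        using uc y' p by (simp add: m_ac)
      also have "\<dots> = p [^] k \<otimes> (y' [^] m \<otimes> (p [^] j \<otimes> p))" using ku y' p by (simp add: Units_r_inv)
      finally show ?thesis using y' p by (simp add: m_ac)
    qed
    finally have "y [^] m = z \<otimes> ?w" using ku(2) by simp
    thus "\<exists>w\<in>P. y [^] m = z \<otimes> w" using w by blast
  qed
qed

lemma dvr_F':
  fixes R :: "('a, 'm) ring_scheme" (structure)
  assumes d: "dvr R P" and Pp: "P = PIdl\<^bsub>R\<^esub> p" and p: "p \<in> carrier R"
    and z: "z \<in> carrier R" and y: "y \<in> P" and zy: "z = \<zero>\<^bsub>R\<^esub> \<Longrightarrow> y = \<zero>\<^bsub>R\<^esub>"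
  shows "\<exists>n. \<forall>m\<ge>n. \<exists>w\<in>P. y [^]\<^bsub>R\<^esub> (m::nat) = z \<otimes>\<^bsub>R\<^esub> w"
proof (cases "z = \<zero>")
  case False thus ?thesis using dvr_F[OF d Pp p z False y] by blast
next
  case True
  interpret principal_domain R using d unfolding dvr_def by blast
  have "\<zero> \<in> P" using d unfolding dvr_def
    by (simp add: additive_subgroup.zero_closed ideal.axioms(1) maximalideal.axioms(1))
  moreover have "\<forall>m\<ge>1. y [^] (m::nat) = z \<otimes> \<zero>" using True zy by (simp add: nat_pow_zero)
  ultimately show ?thesis by blast
qed

locale pb =
  fixes R1 :: "'a ring" and R2 :: "'b ring" and Rbar :: "'c ring"
    and V1 :: "'a \<Rightarrow> 'c" and V2 :: "'b \<Rightarrow> 'c" and p1 :: 'a and p2 :: 'b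
    and P1 P2 and R :: "('a \<times> 'b) ring"
  assumes P1_def: "P1 = PIdl\<^bsub>R1\<^esub> p1" and P2_def: "P2 = PIdl\<^bsub>R2\<^esub> p2"
    and R_def: "R = pullback_ring R1 R2 V1 V2"
    and p1: "p1 \<in> carrier R1" and p2: "p2 \<in> carrier R2"
    and dvr1: "dvr R1 P1" and dvr2: "dvr R2 P2"
    and field: "field Rbar"
    and V1: "V1 \<in> ring_hom R1 Rbar" and V1_ker: "a_kernel R1 Rbar V1 = P1"
    and V2: "V2 \<in> ring_hom R2 Rbar" and V2_ker: "a_kernel R2 Rbar V2 = P2"
    and cringR: "cring R"
begin

sublocale R1: principal_domain R1 using dvr1 unfolding dvr_def by blast
sublocale R2: principal_domain R2 using dvr2 unfolding dvr_def by blast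
sublocale Rb: field Rbar by (rule field)
sublocale R: cring R by (rule cringR)

lemma carrier_R: "carrier R = {(r1, r2). r1 \<in> carrier R1 \<and> r2 \<in> carrier R2 \<and> V1 r1 = V2 r2}"
  unfolding R_def pullback_ring_def by simp

lemma mult_R: "(a, b) \<otimes>\<^bsub>R\<^esub> (c, d) = (a \<otimes>\<^bsub>R1\<^esub> c, b \<otimes>\<^bsub>R2\<^esub> d)"
  unfolding R_def pullback_ring_def RDirProd_def DirProd_def by (simp add: monoid.defs)

lemma add_R: "(a, b) \<oplus>\<^bsub>R\<^esub> (c, d) = (a \<oplus>\<^bsub>R1\<^esub> c, b \<oplus>\<^bsub>R2\<^esub> d)"
  unfolding R_def pullback_ring_def RDirProd_def DirProd_def by (simp add: monoid.defs)

lemma zero_R: "\<zero>\<^bsub>R\<^esub> = (\<zero>\<^bsub>R1\<^esub>, \<zero>\<^bsub>R2\<^esub>)"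
  unfolding R_def pullback_ring_def RDirProd_def DirProd_def by (simp add: monoid.defs)

lemma one_R: "\<one>\<^bsub>R\<^esub> = (\<one>\<^bsub>R1\<^esub>, \<one>\<^bsub>R2\<^esub>)"
  unfolding R_def pullback_ring_def RDirProd_def DirProd_def by (simp add: monoid.defs)

lemma pow_R: "(a, b) [^]\<^bsub>R\<^esub> (n::nat) = (a [^]\<^bsub>R1\<^esub> n, b [^]\<^bsub>R2\<^esub> n)"
  by (induction n) (simp_all add: one_R mult_R)

lemma V1_zero: "V1 \<zero>\<^bsub>R1\<^esub> = \<zero>\<^bsub>Rbar\<^esub>"
  using ring_hom_zero[OF V1] R1.ring_axioms Rb.ring_axioms by blast
lemma V2_zero: "V2 \<zero>\<^bsub>R2\<^esub> = \<zero>\<^bsub>Rbar\<^esub>"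
  using ring_hom_zero[OF V2] R2.ring_axioms Rb.ring_axioms by blast

lemma P1_iff: "x \<in> carrier R1 \<Longrightarrow> x \<in> P1 \<longleftrightarrow> V1 x = \<zero>\<^bsub>Rbar\<^esub>"
  using V1_ker unfolding a_kernel_def' by blast
lemma P2_iff: "x \<in> carrier R2 \<Longrightarrow> x \<in> P2 \<longleftrightarrow> V2 x = \<zero>\<^bsub>Rbar\<^esub>"
  using V2_ker unfolding a_kernel_def' by blast
lemma P1_sub: "P1 \<subseteq> carrier R1" using V1_ker unfolding a_kernel_def' by blast
lemma P2_sub: "P2 \<subseteq> carrier R2" using V2_ker unfolding a_kernel_def' by blast
lemma zero_P1: "\<zero>\<^bsub>R1\<^esub> \<in> P1" using P1_iff V1_zero by simp
lemma zero_P2: "\<zero>\<^bsub>R2\<^esub> \<in> P2" using P2_iff V2_zero by simp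

lemma snd_P2: "(a, b) \<in> carrier R \<Longrightarrow> a \<in> P1 \<Longrightarrow> b \<in> P2"
  using P1_iff P2_iff by (auto simp: carrier_R)

lemma I1_sub: "{(a, \<zero>\<^bsub>R2\<^esub>) | a. a \<in> P1} \<subseteq> carrier R"
  using P1_iff P1_sub V2_zero by (auto simp: carrier_R)
lemma I2_sub: "{(\<zero>\<^bsub>R1\<^esub>, b) | b. b \<in> P2} \<subseteq> carrier R"
  using P2_iff P2_sub V1_zero by (auto simp: carrier_R)

lemma P_decomp: assumes "(a, b) \<in> carrier R" "a \<in> P1"
  shows "(a, b) = (a, \<zero>\<^bsub>R2\<^esub>) \<oplus>\<^bsub>R\<^esub> (\<zero>\<^bsub>R1\<^esub>, b)"
  using assms by (auto simp: add_R carrier_R)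

lemma unit_or_P: assumes r: "r \<in> carrier R" shows "fst r \<in> P1 \<or> r \<in> Units R"
proof (cases "fst r \<in> P1")
  case False
  obtain a b where ab: "r = (a, b)" by (cases r)
  have abc: "a \<in> carrier R1" "b \<in> carrier R2" "V1 a = V2 b" using r ab by (auto simp: carrier_R)
  have aP: "a \<notin> P1" using False ab by simp
  hence bP: "b \<notin> P2" using P1_iff P2_iff abc by auto
  have ua: "a \<in> Units R1" using dvr_unit[OF dvr1 abc(1) aP] .
  have ub: "b \<in> Units R2" using dvr_unit[OF dvr2 abc(2) bP] .
  have ia: "inv\<^bsub>R1\<^esub> a \<in> carrier R1" using ua by simp
  have ib: "inv\<^bsub>R2\<^esub> b \<in> carrier R2" using ub by simp
  have t0: "V1 a \<noteq> \<zero>\<^bsub>Rbar\<^esub>" using aP P1_iff abc by auto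
  have e1: "V1 (inv\<^bsub>R1\<^esub> a) \<otimes>\<^bsub>Rbar\<^esub> V1 a = \<one>\<^bsub>Rbar\<^esub>"
    using ring_hom_mult[OF V1 ia abc(1)] ua ring_hom_one[OF V1] by (simp add: R1.Units_l_inv)
  have e2: "V2 (inv\<^bsub>R2\<^esub> b) \<otimes>\<^bsub>Rbar\<^esub> V1 a = \<one>\<^bsub>Rbar\<^esub>"
    using ring_hom_mult[OF V2 ib abc(2)] ub ring_hom_one[OF V2] abc(3) by (simp add: R2.Units_l_inv)
  have "V1 (inv\<^bsub>R1\<^esub> a) = V2 (inv\<^bsub>R2\<^esub> b)"
    using Rb.m_rcancel[OF t0 _ ring_hom_closed[OF V1 ia] ring_hom_closed[OF V2 ib]] e1 e2
      ring_hom_closed[OF V1 abc(1)] by simp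
  hence ic: "(inv\<^bsub>R1\<^esub> a, inv\<^bsub>R2\<^esub> b) \<in> carrier R" using ia ib by (simp add: carrier_R)
  have "r \<in> Units R" unfolding Units_def
    using ic r ab ua ub
    by (intro CollectI conjI bexI[of _ "(inv\<^bsub>R1\<^esub> a, inv\<^bsub>R2\<^esub> b)"])
       (auto simp: mult_R one_R R1.Units_l_inv R1.Units_r_inv R2.Units_l_inv R2.Units_r_inv)
  thus ?thesis by blast
qed simp

lemma ideal_proper_P: assumes J: "ideal J R" "J \<noteq> carrier R" and r: "r \<in> J"
  shows "fst r \<in> P1"
proof (rule ccontr)
  assume "fst r \<notin> P1"
  have rc: "r \<in> carrier R" using J r by (meson ideal.Icarr)
  hence u: "r \<in> Units R" using unit_or_P \<open>fst r \<notin> P1\<close> by blast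
  have "\<one>\<^bsub>R\<^esub> \<in> J" using ideal.I_l_closed[OF J(1) r, of "inv\<^bsub>R\<^esub> r"] u
    by (metis R.Units_inv_closed R.Units_l_inv)
  thus False using ideal.one_imp_carrier[OF J(1)] J(2) by blast
qed

end

context pb begin

lemma P1_ideal: "ideal P1 R1" using dvr1 unfolding dvr_def by (simp add: maximalideal.axioms(1))
lemma P2_ideal: "ideal P2 R2" using dvr2 unfolding dvr_def by (simp add: maximalideal.axioms(1))

lemma rad_G:
  assumes J: "ideal J R" and y: "(y1, y2) \<in> carrier R" "y1 \<in> P1"
    and z: "(z1, z2) \<in> J" and h1: "z1 = \<zero>\<^bsub>R1\<^esub> \<Longrightarrow> y1 = \<zero>\<^bsub>R1\<^esub>"
    and h2: "z2 = \<zero>\<^bsub>R2\<^esub> \<Longrightarrow> y2 = \<zero>\<^bsub>R2\<^esub>"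
  shows "(y1, y2) \<in> rad R J"
proof -
  have zc: "(z1, z2) \<in> carrier R" using J z by (meson ideal.Icarr)
  hence zc': "z1 \<in> carrier R1" "z2 \<in> carrier R2" by (auto simp: carrier_R)
  have y2P: "y2 \<in> P2" using snd_P2 y by blast
  obtain n1 where n1: "\<forall>m\<ge>n1. \<exists>w\<in>P1. y1 [^]\<^bsub>R1\<^esub> (m::nat) = z1 \<otimes>\<^bsub>R1\<^esub> w"
    using dvr_F'[OF dvr1 P1_def p1 zc'(1) y(2) h1] by blast
  obtain n2 where n2: "\<forall>m\<ge>n2. \<exists>w\<in>P2. y2 [^]\<^bsub>R2\<^esub> (m::nat) = z2 \<otimes>\<^bsub>R2\<^esub> w"
    using dvr_F'[OF dvr2 P2_def p2 zc'(2) y2P h2] by blast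
  obtain w1 where w1: "w1 \<in> P1" "y1 [^]\<^bsub>R1\<^esub> (max n1 n2) = z1 \<otimes>\<^bsub>R1\<^esub> w1" using n1[rule_format, OF max.cobounded1] by blast
  obtain w2 where w2: "w2 \<in> P2" "y2 [^]\<^bsub>R2\<^esub> (max n1 n2) = z2 \<otimes>\<^bsub>R2\<^esub> w2" using n2[rule_format, OF max.cobounded2] by blast
  have v: "V1 w1 = \<zero>\<^bsub>Rbar\<^esub>" "V2 w2 = \<zero>\<^bsub>Rbar\<^esub>"
    using w1(1) w2(1) P1_iff P2_iff P1_sub P2_sub by blast+
  have wc: "(w1, w2) \<in> carrier R" using w1 w2 v P1_sub P2_sub by (auto simp: carrier_R)
  have "(y1, y2) [^]\<^bsub>R\<^esub> (max n1 n2) = (z1, z2) \<otimes>\<^bsub>R\<^esub> (w1, w2)"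
    using w1 w2 by (simp add: pow_R mult_R)
  also have "\<dots> \<in> J" using ideal.I_r_closed[OF J z wc] .
  finally show ?thesis unfolding rad_def using y by blast
qed

lemma J_rad: "ideal J R \<Longrightarrow> x \<in> J \<Longrightarrow> x \<in> rad R J"
  unfolding rad_def by (metis (no_types, lifting) R.nat_pow_eone ideal.Icarr mem_Collect_eq)

lemma all_2ap: assumes J: "ideal J R" "J \<noteq> carrier R" shows "two_absorbing_primary R J"
  unfolding two_absorbing_primary_def
proof (intro conjI J ballI impI)
  fix a b c assume a: "a \<in> carrier R" and b: "b \<in> carrier R" and c: "c \<in> carrier R"
    and abc: "a \<otimes>\<^bsub>R\<^esub> b \<otimes>\<^bsub>R\<^esub> c \<in> J"
  show "a \<otimes>\<^bsub>R\<^esub> b \<in> J \<or> a \<otimes>\<^bsub>R\<^esub> c \<in> rad R J \<or> b \<otimes>\<^bsub>R\<^esub> c \<in> rad R J"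
  proof (cases "a \<in> Units R \<or> b \<in> Units R \<or> c \<in> Units R")
    case True
    then consider "a \<in> Units R" | "b \<in> Units R" | "c \<in> Units R" by blast
    thus ?thesis
    proof cases
      case 1
      have "inv\<^bsub>R\<^esub> a \<otimes>\<^bsub>R\<^esub> (a \<otimes>\<^bsub>R\<^esub> b \<otimes>\<^bsub>R\<^esub> c) = b \<otimes>\<^bsub>R\<^esub> c"
        using 1 a b c by (simp add: R.m_assoc[symmetric] R.Units_l_inv)
      hence "b \<otimes>\<^bsub>R\<^esub> c \<in> J" using ideal.I_l_closed[OF J(1) abc, of "inv\<^bsub>R\<^esub> a"] 1 by simp
      thus ?thesis using J_rad[OF J(1)] by blast
    next
      case 2
      have "(a \<otimes>\<^bsub>R\<^esub> b \<otimes>\<^bsub>R\<^esub> c) \<otimes>\<^bsub>R\<^esub> inv\<^bsub>R\<^esub> b = a \<otimes>\<^bsub>R\<^esub> c"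
      proof -
        have "(a \<otimes>\<^bsub>R\<^esub> b \<otimes>\<^bsub>R\<^esub> c) \<otimes>\<^bsub>R\<^esub> inv\<^bsub>R\<^esub> b = a \<otimes>\<^bsub>R\<^esub> c \<otimes>\<^bsub>R\<^esub> (b \<otimes>\<^bsub>R\<^esub> inv\<^bsub>R\<^esub> b)"
          using 2 a b c R.Units_inv_closed[OF 2] by (simp add: R.m_ac del: R.Units_r_inv R.Units_l_inv)
        also have "\<dots> = a \<otimes>\<^bsub>R\<^esub> c" using 2 a c by (simp del: R.m_ac add: R.Units_r_inv)
        finally show ?thesis .
      qed
      hence "a \<otimes>\<^bsub>R\<^esub> c \<in> J" using ideal.I_r_closed[OF J(1) abc, of "inv\<^bsub>R\<^esub> b"] 2 by simp
      thus ?thesis using J_rad[OF J(1)] by blast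
    next
      case 3
      have "(a \<otimes>\<^bsub>R\<^esub> b \<otimes>\<^bsub>R\<^esub> c) \<otimes>\<^bsub>R\<^esub> inv\<^bsub>R\<^esub> c = a \<otimes>\<^bsub>R\<^esub> b"
        using 3 a b c by (simp add: R.m_assoc R.Units_r_inv)
      hence "a \<otimes>\<^bsub>R\<^esub> b \<in> J" using ideal.I_r_closed[OF J(1) abc, of "inv\<^bsub>R\<^esub> c"] 3 by simp
      thus ?thesis by blast
    qed
  next
    case False
    hence aP: "fst a \<in> P1" and bP: "fst b \<in> P1" and cP: "fst c \<in> P1"
      using unit_or_P a b c by blast+
    obtain a1 a2 where a': "a = (a1, a2)" by (cases a)
    obtain b1 b2 where b': "b = (b1, b2)" by (cases b)
    obtain c1 c2 where c': "c = (c1, c2)" by (cases c)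
    have cc: "a1 \<in> carrier R1" "a2 \<in> carrier R2" "b1 \<in> carrier R1" "b2 \<in> carrier R2"
      "c1 \<in> carrier R1" "c2 \<in> carrier R2" using a b c a' b' c' by (auto simp: carrier_R)
    have z: "(a1 \<otimes>\<^bsub>R1\<^esub> b1 \<otimes>\<^bsub>R1\<^esub> c1, a2 \<otimes>\<^bsub>R2\<^esub> b2 \<otimes>\<^bsub>R2\<^esub> c2) \<in> J"
      using abc a' b' c' by (simp add: mult_R)
    have z1: "a1 \<otimes>\<^bsub>R1\<^esub> b1 \<otimes>\<^bsub>R1\<^esub> c1 = \<zero>\<^bsub>R1\<^esub> \<longleftrightarrow> a1 = \<zero>\<^bsub>R1\<^esub> \<or> b1 = \<zero>\<^bsub>R1\<^esub> \<or> c1 = \<zero>\<^bsub>R1\<^esub>"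
      using cc by (simp add: R1.integral_iff)
    have z2: "a2 \<otimes>\<^bsub>R2\<^esub> b2 \<otimes>\<^bsub>R2\<^esub> c2 = \<zero>\<^bsub>R2\<^esub> \<longleftrightarrow> a2 = \<zero>\<^bsub>R2\<^esub> \<or> b2 = \<zero>\<^bsub>R2\<^esub> \<or> c2 = \<zero>\<^bsub>R2\<^esub>"
      using cc by (simp add: R2.integral_iff)
    have ac1: "a1 \<otimes>\<^bsub>R1\<^esub> c1 = \<zero>\<^bsub>R1\<^esub> \<longleftrightarrow> a1 = \<zero>\<^bsub>R1\<^esub> \<or> c1 = \<zero>\<^bsub>R1\<^esub>"
      and ac2: "a2 \<otimes>\<^bsub>R2\<^esub> c2 = \<zero>\<^bsub>R2\<^esub> \<longleftrightarrow> a2 = \<zero>\<^bsub>R2\<^esub> \<or> c2 = \<zero>\<^bsub>R2\<^esub>"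
      and bc1: "b1 \<otimes>\<^bsub>R1\<^esub> c1 = \<zero>\<^bsub>R1\<^esub> \<longleftrightarrow> b1 = \<zero>\<^bsub>R1\<^esub> \<or> c1 = \<zero>\<^bsub>R1\<^esub>"
      and bc2: "b2 \<otimes>\<^bsub>R2\<^esub> c2 = \<zero>\<^bsub>R2\<^esub> \<longleftrightarrow> b2 = \<zero>\<^bsub>R2\<^esub> \<or> c2 = \<zero>\<^bsub>R2\<^esub>"
      and ab1: "a1 \<otimes>\<^bsub>R1\<^esub> b1 = \<zero>\<^bsub>R1\<^esub> \<longleftrightarrow> a1 = \<zero>\<^bsub>R1\<^esub> \<or> b1 = \<zero>\<^bsub>R1\<^esub>"
      and ab2: "a2 \<otimes>\<^bsub>R2\<^esub> b2 = \<zero>\<^bsub>R2\<^esub> \<longleftrightarrow> a2 = \<zero>\<^bsub>R2\<^esub> \<or> b2 = \<zero>\<^bsub>R2\<^esub>"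
      using cc by (simp_all add: R1.integral_iff R2.integral_iff)
    have acR: "a \<otimes>\<^bsub>R\<^esub> c = (a1 \<otimes>\<^bsub>R1\<^esub> c1, a2 \<otimes>\<^bsub>R2\<^esub> c2)" using a' c' by (simp add: mult_R)
    have bcR: "b \<otimes>\<^bsub>R\<^esub> c = (b1 \<otimes>\<^bsub>R1\<^esub> c1, b2 \<otimes>\<^bsub>R2\<^esub> c2)" using b' c' by (simp add: mult_R)
    have abR: "a \<otimes>\<^bsub>R\<^esub> b = (a1 \<otimes>\<^bsub>R1\<^esub> b1, a2 \<otimes>\<^bsub>R2\<^esub> b2)" using a' b' by (simp add: mult_R)
    have acC: "(a1 \<otimes>\<^bsub>R1\<^esub> c1, a2 \<otimes>\<^bsub>R2\<^esub> c2) \<in> carrier R" using acR a c by (metis R.m_closed)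
    have bcC: "(b1 \<otimes>\<^bsub>R1\<^esub> c1, b2 \<otimes>\<^bsub>R2\<^esub> c2) \<in> carrier R" using bcR b c by (metis R.m_closed)
    have acP: "a1 \<otimes>\<^bsub>R1\<^esub> c1 \<in> P1" using aP a' cc ideal.I_r_closed[OF P1_ideal] by simp
    have bcP: "b1 \<otimes>\<^bsub>R1\<^esub> c1 \<in> P1" using bP b' cc ideal.I_r_closed[OF P1_ideal] by simp
    show ?thesis
    proof (cases "(b1 = \<zero>\<^bsub>R1\<^esub> \<longrightarrow> a1 = \<zero>\<^bsub>R1\<^esub> \<or> c1 = \<zero>\<^bsub>R1\<^esub>) \<and> (b2 = \<zero>\<^bsub>R2\<^esub> \<longrightarrow> a2 = \<zero>\<^bsub>R2\<^esub> \<or> c2 = \<zero>\<^bsub>R2\<^esub>)")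
      case True
      have "(a1 \<otimes>\<^bsub>R1\<^esub> c1, a2 \<otimes>\<^bsub>R2\<^esub> c2) \<in> rad R J"
        by (rule rad_G[OF J(1) acC acP z]) (use True z1 z2 ac1 ac2 in blast)+
      thus ?thesis using acR by simp
    next
      case False1: False
      show ?thesis
      proof (cases "(a1 = \<zero>\<^bsub>R1\<^esub> \<longrightarrow> b1 = \<zero>\<^bsub>R1\<^esub> \<or> c1 = \<zero>\<^bsub>R1\<^esub>) \<and> (a2 = \<zero>\<^bsub>R2\<^esub> \<longrightarrow> b2 = \<zero>\<^bsub>R2\<^esub> \<or> c2 = \<zero>\<^bsub>R2\<^esub>)")
        case True
        have "(b1 \<otimes>\<^bsub>R1\<^esub> c1, b2 \<otimes>\<^bsub>R2\<^esub> c2) \<in> rad R J"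
          by (rule rad_G[OF J(1) bcC bcP z]) (use True z1 z2 bc1 bc2 in blast)+
        thus ?thesis using bcR by simp
      next
        case False
        have "a \<otimes>\<^bsub>R\<^esub> b = \<zero>\<^bsub>R\<^esub>" using False False1 abR ab1 ab2 zero_R by auto
        moreover have "\<zero>\<^bsub>R\<^esub> \<in> J" using J(1) by (simp add: additive_subgroup.zero_closed ideal.axioms(1))
        ultimately show ?thesis by simp
      qed
    qed
  qed
qed

end

context module begin

definition cyc :: "'c \<Rightarrow> 'c set" where "cyc m = {r \<odot>\<^bsub>M\<^esub> m | r. r \<in> carrier R}"

lemma cyc_sub: assumes m: "m \<in> carrier M" shows "submodule (cyc m) R M"
proof (rule submoduleI)
  show "cyc m \<subseteq> carrier M" using m unfolding cyc_def by auto
  show "\<zero>\<^bsub>M\<^esub> \<in> cyc m" unfolding cyc_def using m by (auto intro!: exI[of _ "\<zero>"])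
  fix a b assume a: "a \<in> cyc m" and b: "b \<in> cyc m"
  then obtain r s where rs: "r \<in> carrier R" "a = r \<odot>\<^bsub>M\<^esub> m" "s \<in> carrier R" "b = s \<odot>\<^bsub>M\<^esub> m"
    unfolding cyc_def by blast
  show "\<ominus>\<^bsub>M\<^esub> a \<in> cyc m" unfolding cyc_def using rs m
    by (auto intro!: exI[of _ "\<ominus> r"] simp: smult_l_minus)
  show "a \<oplus>\<^bsub>M\<^esub> b \<in> cyc m" unfolding cyc_def using rs m
    by (auto intro!: exI[of _ "r \<oplus> s"] simp: smult_l_distr)
next
  fix a x assume a: "a \<in> carrier R" and x: "x \<in> cyc m"
  then obtain r where r: "r \<in> carrier R" "x = r \<odot>\<^bsub>M\<^esub> m" unfolding cyc_def by blast
  show "a \<odot>\<^bsub>M\<^esub> x \<in> cyc m" unfolding cyc_def using r a m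
    by (auto intro!: exI[of _ "a \<otimes> r"] simp: smult_assoc1)
qed

lemma cyc_self: "m \<in> carrier M \<Longrightarrow> m \<in> cyc m"
  unfolding cyc_def by (auto intro!: exI[of _ "\<one>"])

lemma colon_ideal: assumes N: "submodule N R M" shows "ideal (mod_colon R N M) R"
proof -
  have Nz: "\<zero>\<^bsub>M\<^esub> \<in> N" using N by (metis submodule.axioms(1) subgroup.one_closed monoid.simps(2))
  show ?thesis
  proof (rule idealI)
    show "ring R" by (rule ring_axioms)
    show "subgroup (mod_colon R N M) (add_monoid R)"
    proof (rule R.add.subgroupI)
      show "mod_colon R N M \<subseteq> carrier R" unfolding mod_colon_def by auto
      show "mod_colon R N M \<noteq> {}" unfolding mod_colon_def using Nz by (auto intro!: exI[of _ "\<zero>"])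
      fix a b assume a: "a \<in> mod_colon R N M" and b: "b \<in> mod_colon R N M"
      show "\<ominus> a \<in> mod_colon R N M"
        using a N submoduleE(3) unfolding mod_colon_def by (auto simp: smult_l_minus)
      show "a \<oplus> b \<in> mod_colon R N M"
        using a b N submoduleE(5) unfolding mod_colon_def by (auto simp: smult_l_distr)
    qed
  next
    fix a x assume a: "a \<in> mod_colon R N M" and x: "x \<in> carrier R"
    show "x \<otimes> a \<in> mod_colon R N M"
      using a x N submoduleE(4) unfolding mod_colon_def by (auto simp: smult_assoc1)
    show "a \<otimes> x \<in> mod_colon R N M"
      using a x N submoduleE(4) unfolding mod_colon_def by (auto simp: smult_assoc1 m_comm)
  qed
qed

lemma colon_proper: "N \<subseteq> carrier M \<Longrightarrow> N \<noteq> carrier M \<Longrightarrow> mod_colon R N M \<noteq> carrier R"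
  unfolding mod_colon_def by (metis (no_types, lifting) mem_Collect_eq one_closed smult_one subsetI subset_antisym)

lemma cyclic_pap: assumes m: "m \<in> carrier M" and cy: "carrier M = cyc m"
  shows "pap_multiplication_module R M"
  unfolding pap_multiplication_module_def
proof (intro allI impI)
  fix N assume "pseudo_absorbing_primary R M N"
  hence N: "submodule N R M" unfolding pseudo_absorbing_primary_def by blast
  let ?I = "mod_colon R N M"
  have I: "ideal ?I R" by (rule colon_ideal[OF N])
  have Isub: "?I \<subseteq> carrier R" unfolding mod_colon_def by auto
  have "ideal_mod_prod ?I R M \<subseteq> N" by (rule imp_min[OF N]) (auto simp: mod_colon_def)
  moreover have "N \<subseteq> ideal_mod_prod ?I R M"
  proof
    fix n assume n: "n \<in> N"
    hence "n \<in> cyc m" using cy N submoduleE(1) by blast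
    then obtain r where r: "r \<in> carrier R" "n = r \<odot>\<^bsub>M\<^esub> m" unfolding cyc_def by blast
    have "r \<in> ?I" unfolding mod_colon_def
    proof (intro CollectI conjI ballI r(1))
      fix x assume "x \<in> carrier M"
      then obtain t where t: "t \<in> carrier R" "x = t \<odot>\<^bsub>M\<^esub> m" using cy unfolding cyc_def by blast
      have "r \<odot>\<^bsub>M\<^esub> x = t \<odot>\<^bsub>M\<^esub> n" using t r m by (simp add: smult_assoc1[symmetric] m_comm)
      thus "r \<odot>\<^bsub>M\<^esub> x \<in> N" using N submoduleE(4) t n by metis
    qed
    thus "n \<in> ideal_mod_prod ?I R M" using r imp_gen m by simp
  qed
  ultimately show "\<exists>I. ideal I R \<and> N = ideal_mod_prod I R M" using I by blast
qed

lemma sub_zero: "submodule N R M \<Longrightarrow> \<zero>\<^bsub>M\<^esub> \<in> N"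
  by (metis submodule.axioms(1) subgroup.one_closed monoid.simps(2))

lemma submodule_inter: "submodule A R M \<Longrightarrow> submodule B R M \<Longrightarrow> submodule (A \<inter> B) R M"
  by (rule submoduleI) (auto dest: submoduleE sub_zero)

lemma kernel_sub: assumes N: "module R N" and phi: "mod_hom R M N phi"
  shows "submodule {x \<in> carrier M. phi x = \<zero>\<^bsub>N\<^esub>} R M"
proof -
  interpret N: module R N by (rule N)
  have pc: "\<And>x. x \<in> carrier M \<Longrightarrow> phi x \<in> carrier N" using phi unfolding mod_hom_def by (auto simp: Pi_iff)
  have pa: "\<And>x y. x \<in> carrier M \<Longrightarrow> y \<in> carrier M \<Longrightarrow> phi (x \<oplus>\<^bsub>M\<^esub> y) = phi x \<oplus>\<^bsub>N\<^esub> phi y"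
    using phi unfolding mod_hom_def by blast
  have ps: "\<And>r x. r \<in> carrier R \<Longrightarrow> x \<in> carrier M \<Longrightarrow> phi (r \<odot>\<^bsub>M\<^esub> x) = r \<odot>\<^bsub>N\<^esub> phi x"
    using phi unfolding mod_hom_def by blast
  have hz: "phi \<zero>\<^bsub>M\<^esub> = \<zero>\<^bsub>N\<^esub>"
  proof -
    have "phi (\<zero> \<odot>\<^bsub>M\<^esub> \<zero>\<^bsub>M\<^esub>) = \<zero> \<odot>\<^bsub>N\<^esub> phi \<zero>\<^bsub>M\<^esub>" using ps[of "\<zero>" "\<zero>\<^bsub>M\<^esub>"] by simp
    moreover have "\<zero> \<odot>\<^bsub>M\<^esub> \<zero>\<^bsub>M\<^esub> = \<zero>\<^bsub>M\<^esub>" by simp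
    moreover have "\<zero> \<odot>\<^bsub>N\<^esub> phi \<zero>\<^bsub>M\<^esub> = \<zero>\<^bsub>N\<^esub>" using pc[of "\<zero>\<^bsub>M\<^esub>"] N.smult_l_null by simp
    ultimately show ?thesis by simp
  qed
  have hn: "phi (\<ominus>\<^bsub>M\<^esub> x) = \<ominus>\<^bsub>N\<^esub> phi x" if x: "x \<in> carrier M" for x
  proof -
    have e1: "(\<ominus> \<one>) \<odot>\<^bsub>M\<^esub> x = \<ominus>\<^bsub>M\<^esub> x" using smult_l_minus[of "\<one>" x] x by simp
    have e2: "(\<ominus> \<one>) \<odot>\<^bsub>N\<^esub> phi x = \<ominus>\<^bsub>N\<^esub> phi x" using N.smult_l_minus[of "\<one>" "phi x"] pc[OF x] by simp
    have "phi ((\<ominus> \<one>) \<odot>\<^bsub>M\<^esub> x) = (\<ominus> \<one>) \<odot>\<^bsub>N\<^esub> phi x" using ps x by simp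
    thus ?thesis using e1 e2 by simp
  qed
  have nz: "\<ominus>\<^bsub>N\<^esub> \<zero>\<^bsub>N\<^esub> = \<zero>\<^bsub>N\<^esub>" by (metis N.M.l_neg N.M.r_zero N.M.zero_closed N.M.add.inv_closed)
  show ?thesis
  proof (rule submoduleI)
    show "{x \<in> carrier M. phi x = \<zero>\<^bsub>N\<^esub>} \<subseteq> carrier M" by blast
    show "\<zero>\<^bsub>M\<^esub> \<in> {x \<in> carrier M. phi x = \<zero>\<^bsub>N\<^esub>}" using hz by simp
    fix a b assume a: "a \<in> {x \<in> carrier M. phi x = \<zero>\<^bsub>N\<^esub>}" and b: "b \<in> {x \<in> carrier M. phi x = \<zero>\<^bsub>N\<^esub>}"
    show "\<ominus>\<^bsub>M\<^esub> a \<in> {x \<in> carrier M. phi x = \<zero>\<^bsub>N\<^esub>}" using a hn by (simp add: nz)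
    show "a \<oplus>\<^bsub>M\<^esub> b \<in> {x \<in> carrier M. phi x = \<zero>\<^bsub>N\<^esub>}" using a b pa by simp
  next
    fix r a assume r: "r \<in> carrier R" and a: "a \<in> {x \<in> carrier M. phi x = \<zero>\<^bsub>N\<^esub>}"
    show "r \<odot>\<^bsub>M\<^esub> a \<in> {x \<in> carrier M. phi x = \<zero>\<^bsub>N\<^esub>}" using r a ps by simp
  qed
qed

end

context pb begin

definition Pset where "Pset = {r \<in> carrier R. fst r \<in> P1}"

lemma fst_mult: "fst (x \<otimes>\<^bsub>R\<^esub> y) = fst x \<otimes>\<^bsub>R1\<^esub> fst y"
  by (cases x, cases y) (simp add: mult_R)
lemma fst_add: "fst (x \<oplus>\<^bsub>R\<^esub> y) = fst x \<oplus>\<^bsub>R1\<^esub> fst y"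
  by (cases x, cases y) (simp add: add_R)
lemma fst_carrier: "x \<in> carrier R \<Longrightarrow> fst x \<in> carrier R1"
  by (auto simp: carrier_R)

lemma Pset_sub: "Pset \<subseteq> carrier R" unfolding Pset_def by blast
lemma Pset_lmult: "r \<in> carrier R \<Longrightarrow> q \<in> Pset \<Longrightarrow> r \<otimes>\<^bsub>R\<^esub> q \<in> Pset"
  unfolding Pset_def using ideal.I_l_closed[OF P1_ideal] fst_carrier by (auto simp: fst_mult)
lemma Pset_rmult: "r \<in> carrier R \<Longrightarrow> q \<in> Pset \<Longrightarrow> q \<otimes>\<^bsub>R\<^esub> r \<in> Pset"
  unfolding Pset_def using ideal.I_r_closed[OF P1_ideal] fst_carrier by (auto simp: fst_mult)
lemma Pset_add: "p \<in> Pset \<Longrightarrow> q \<in> Pset \<Longrightarrow> p \<oplus>\<^bsub>R\<^esub> q \<in> Pset"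
  unfolding Pset_def using additive_subgroup.a_closed[OF ideal.axioms(1)[OF P1_ideal]] by (auto simp: fst_add)
lemma Pset_zero: "\<zero>\<^bsub>R\<^esub> \<in> Pset"
  unfolding Pset_def using zero_P1 R.zero_closed by (simp add: zero_R)
lemma one_notP1: "\<one>\<^bsub>R1\<^esub> \<notin> P1"
  using ideal.one_imp_carrier[OF P1_ideal] dvr1 unfolding dvr_def by (metis maximalideal.I_notcarr)

lemma pap_cyclic:
  fixes M :: "('a \<times> 'b, 'm) module"
  assumes Mm: "module R M" and nz: "carrier M \<noteq> {\<zero>\<^bsub>M\<^esub>}" and pap: "pap_multiplication_module R M"
  shows "\<exists>m\<in>carrier M. carrier M = module.cyc R M m"
proof -
  interpret Mm: module R M by (rule Mm)
  have key: "Mm.cyc m = carrier M \<or> (\<exists>J. J \<subseteq> Pset \<and> Mm.cyc m = ideal_mod_prod J R M)"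
    if m: "m \<in> carrier M" for m
  proof (cases "Mm.cyc m = carrier M")
    case False
    have N: "submodule (Mm.cyc m) R M" by (rule Mm.cyc_sub[OF m])
    have Nc: "Mm.cyc m \<subseteq> carrier M" using N Mm.submoduleE(1) by blast
    have "pseudo_absorbing_primary R M (Mm.cyc m)"
      unfolding pseudo_absorbing_primary_def
      using N False all_2ap[OF Mm.colon_ideal[OF N] Mm.colon_proper[OF Nc False]] by blast
    then obtain I where I: "ideal I R" "Mm.cyc m = ideal_mod_prod I R M"
      using pap unfolding pap_multiplication_module_def by blast
    have Ic: "I \<subseteq> carrier R" using I(1) by (meson ideal.Icarr subsetI)
    have "I \<noteq> carrier R"
    proof
      assume "I = carrier R"
      hence "carrier M \<subseteq> ideal_mod_prod I R M" using Mm.imp_gen[of "\<one>\<^bsub>R\<^esub>" I] by force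
      thus False using I(2) False Nc by blast
    qed
    hence "I \<subseteq> Pset" unfolding Pset_def using ideal_proper_P[OF I(1)] Ic by blast
    thus ?thesis using I(2) by blast
  qed simp
  show ?thesis
  proof (cases "carrier M \<subseteq> ideal_mod_prod Pset R M")
    case False
    then obtain m where m: "m \<in> carrier M" "m \<notin> ideal_mod_prod Pset R M" by blast
    have "Mm.cyc m = carrier M"
    proof (rule ccontr)
      assume "Mm.cyc m \<noteq> carrier M"
      then obtain J where J: "J \<subseteq> Pset" "Mm.cyc m = ideal_mod_prod J R M" using key[OF m(1)] by blast
      have "m \<in> ideal_mod_prod J R M" using Mm.cyc_self[OF m(1)] J(2) by simp
      hence "m \<in> ideal_mod_prod Pset R M" using Mm.imp_mono[OF J(1) Pset_sub] by blast
      thus False using m(2) by blast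
    qed
    thus ?thesis using m(1) by blast
  next
    case PM: True
    obtain m where m: "m \<in> carrier M" "m \<noteq> \<zero>\<^bsub>M\<^esub>" using nz Mm.M.zero_closed by blast
    have "Mm.cyc m = carrier M"
    proof (rule ccontr)
      assume "Mm.cyc m \<noteq> carrier M"
      then obtain J where J: "J \<subseteq> Pset" "Mm.cyc m = ideal_mod_prod J R M" using key[OF m(1)] by blast
      have Jc: "J \<subseteq> carrier R" using J(1) Pset_sub by blast
      define Pm where "Pm = {p \<odot>\<^bsub>M\<^esub> m | p. p \<in> Pset}"
      have Pm_sub: "submodule Pm R M"
      proof (rule Mm.submoduleI)
        show "Pm \<subseteq> carrier M" unfolding Pm_def using m Pset_sub by auto
        have "\<zero>\<^bsub>M\<^esub> = \<zero>\<^bsub>R\<^esub> \<odot>\<^bsub>M\<^esub> m" using m by simp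
        thus "\<zero>\<^bsub>M\<^esub> \<in> Pm" unfolding Pm_def using Pset_zero by blast
        fix a b assume a: "a \<in> Pm" and b: "b \<in> Pm"
        then obtain p q where pq: "p \<in> Pset" "a = p \<odot>\<^bsub>M\<^esub> m" "q \<in> Pset" "b = q \<odot>\<^bsub>M\<^esub> m"
          unfolding Pm_def by blast
        have pc: "p \<in> carrier R" "q \<in> carrier R" using pq Pset_sub by auto
        have "\<ominus>\<^bsub>M\<^esub> a = ((\<ominus>\<^bsub>R\<^esub> \<one>\<^bsub>R\<^esub>) \<otimes>\<^bsub>R\<^esub> p) \<odot>\<^bsub>M\<^esub> m"
          using pq pc m by (simp add: Mm.smult_l_minus R.l_minus)
        moreover have "(\<ominus>\<^bsub>R\<^esub> \<one>\<^bsub>R\<^esub>) \<otimes>\<^bsub>R\<^esub> p \<in> Pset" using Pset_lmult pq(1) by simp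
        ultimately show "\<ominus>\<^bsub>M\<^esub> a \<in> Pm" unfolding Pm_def by blast
        have "a \<oplus>\<^bsub>M\<^esub> b = (p \<oplus>\<^bsub>R\<^esub> q) \<odot>\<^bsub>M\<^esub> m" using pq pc m by (simp add: Mm.smult_l_distr)
        thus "a \<oplus>\<^bsub>M\<^esub> b \<in> Pm" unfolding Pm_def using Pset_add pq by blast
      next
        fix r a assume r: "r \<in> carrier R" and a: "a \<in> Pm"
        then obtain p where p: "p \<in> Pset" "a = p \<odot>\<^bsub>M\<^esub> m" unfolding Pm_def by blast
        have "r \<odot>\<^bsub>M\<^esub> a = (r \<otimes>\<^bsub>R\<^esub> p) \<odot>\<^bsub>M\<^esub> m" using p r m Pset_sub by (auto simp: Mm.smult_assoc1)
        thus "r \<odot>\<^bsub>M\<^esub> a \<in> Pm" unfolding Pm_def using Pset_lmult[OF r p(1)] by blast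
      qed
      define Xs where "Xs = {y \<in> carrier M. \<forall>k\<in>J. k \<odot>\<^bsub>M\<^esub> y \<in> Pm}"
      have Xs_sub: "submodule Xs R M"
      proof (rule Mm.submoduleI)
        show "Xs \<subseteq> carrier M" unfolding Xs_def by blast
        show "\<zero>\<^bsub>M\<^esub> \<in> Xs" unfolding Xs_def using Jc Mm.sub_zero[OF Pm_sub] by auto
        fix a b assume a: "a \<in> Xs" and b: "b \<in> Xs"
        show "\<ominus>\<^bsub>M\<^esub> a \<in> Xs" unfolding Xs_def using a Jc Mm.submoduleE(3)[OF Pm_sub]
          by (auto simp: Xs_def Mm.smult_r_minus)
        show "a \<oplus>\<^bsub>M\<^esub> b \<in> Xs" unfolding Xs_def using a b Jc Mm.submoduleE(5)[OF Pm_sub]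
          by (auto simp: Xs_def Mm.smult_r_distr)
      next
        fix r a assume r: "r \<in> carrier R" and a: "a \<in> Xs"
        have "j \<odot>\<^bsub>M\<^esub> (r \<odot>\<^bsub>M\<^esub> a) = r \<odot>\<^bsub>M\<^esub> (j \<odot>\<^bsub>M\<^esub> a)" if "j \<in> J" for j
          using that r a Jc unfolding Xs_def by (auto simp: Mm.smult_assoc1[symmetric] R.m_comm)
        thus "r \<odot>\<^bsub>M\<^esub> a \<in> Xs" using a r Mm.submoduleE(4)[OF Pm_sub] unfolding Xs_def by auto
      qed
      have "ideal_mod_prod Pset R M \<subseteq> Xs"
      proof (rule Mm.imp_min[OF Xs_sub])
        fix q y assume q: "q \<in> Pset" and y: "y \<in> carrier M"
        have qc: "q \<in> carrier R" using q Pset_sub by blast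
        have "j \<odot>\<^bsub>M\<^esub> (q \<odot>\<^bsub>M\<^esub> y) \<in> Pm" if j: "j \<in> J" for j
        proof -
          have jc: "j \<in> carrier R" using j Jc by blast
          have "j \<odot>\<^bsub>M\<^esub> y \<in> Mm.cyc m" using J(2) Mm.imp_gen[OF j y] by simp
          then obtain r where r: "r \<in> carrier R" "j \<odot>\<^bsub>M\<^esub> y = r \<odot>\<^bsub>M\<^esub> m" unfolding Mm.cyc_def by blast
          have "j \<odot>\<^bsub>M\<^esub> (q \<odot>\<^bsub>M\<^esub> y) = q \<odot>\<^bsub>M\<^esub> (j \<odot>\<^bsub>M\<^esub> y)"
            using jc qc y by (simp add: Mm.smult_assoc1[symmetric] R.m_comm)
          also have "\<dots> = (q \<otimes>\<^bsub>R\<^esub> r) \<odot>\<^bsub>M\<^esub> m" using r qc m by (simp add: Mm.smult_assoc1)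
          finally show ?thesis unfolding Pm_def using Pset_rmult[OF r(1) q] by blast
        qed
        thus "q \<odot>\<^bsub>M\<^esub> y \<in> Xs" unfolding Xs_def using qc y by simp
      qed
      hence "carrier M \<subseteq> Xs" using PM by blast
      hence "ideal_mod_prod J R M \<subseteq> Pm"
        by (intro Mm.imp_min[OF Pm_sub]) (auto simp: Xs_def)
      hence "m \<in> Pm" using J(2) Mm.cyc_self[OF m(1)] by blast
      then obtain p where p: "p \<in> Pset" "m = p \<odot>\<^bsub>M\<^esub> m" unfolding Pm_def by blast
      have pc: "p \<in> carrier R" using p Pset_sub by blast
      let ?u = "\<one>\<^bsub>R\<^esub> \<ominus>\<^bsub>R\<^esub> p"
      have uc: "?u \<in> carrier R" using pc by simp
      have "fst ?u \<notin> P1"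
      proof
        assume "fst ?u \<in> P1"
        hence "fst (?u \<oplus>\<^bsub>R\<^esub> p) \<in> P1" using p(1) unfolding Pset_def fst_add
          using additive_subgroup.a_closed[OF ideal.axioms(1)[OF P1_ideal]] by auto
        moreover have "?u \<oplus>\<^bsub>R\<^esub> p = \<one>\<^bsub>R\<^esub>" using pc by (simp add: R.minus_eq R.add.m_assoc R.l_neg)
        ultimately show False using one_notP1 by (simp add: one_R)
      qed
      hence u: "?u \<in> Units R" using unit_or_P[OF uc] by blast
      have "?u \<odot>\<^bsub>M\<^esub> m = m \<ominus>\<^bsub>M\<^esub> m"
        using pc m p(2) by (simp add: R.minus_eq Mm.smult_l_distr Mm.smult_l_minus a_minus_def)
      also have "\<dots> = \<zero>\<^bsub>M\<^esub>" using m by (simp add: a_minus_def Mm.M.r_neg)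
      finally have "inv\<^bsub>R\<^esub> ?u \<odot>\<^bsub>M\<^esub> (?u \<odot>\<^bsub>M\<^esub> m) = \<zero>\<^bsub>M\<^esub>" using u by simp
      moreover have "(inv\<^bsub>R\<^esub> ?u \<otimes>\<^bsub>R\<^esub> ?u) \<odot>\<^bsub>M\<^esub> m = inv\<^bsub>R\<^esub> ?u \<odot>\<^bsub>M\<^esub> (?u \<odot>\<^bsub>M\<^esub> m)"
        using u m uc by (intro Mm.smult_assoc1) auto
      moreover have "inv\<^bsub>R\<^esub> ?u \<otimes>\<^bsub>R\<^esub> ?u = \<one>\<^bsub>R\<^esub>" by (rule R.Units_l_inv[OF u])
      ultimately have "m = \<zero>\<^bsub>M\<^esub>" using m by simp
      thus False using m(2) by blast
    qed
    thus ?thesis using m(1) by blast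
  qed
qed

end

context module begin

lemma mm1: "x \<in> carrier M \<Longrightarrow> y \<in> carrier M \<Longrightarrow> x \<ominus>\<^bsub>M\<^esub> (x \<ominus>\<^bsub>M\<^esub> y) = y"
  unfolding a_minus_def by (simp add: M.minus_add M.minus_minus M.add.m_assoc[symmetric] M.r_neg)
lemma mm2: "x \<in> carrier M \<Longrightarrow> x \<ominus>\<^bsub>M\<^esub> \<zero>\<^bsub>M\<^esub> = x"
  unfolding a_minus_def by (metis M.l_neg M.r_zero M.zero_closed M.add.inv_closed)
lemma mm3: "x \<in> carrier M \<Longrightarrow> y \<in> carrier M \<Longrightarrow> (x \<ominus>\<^bsub>M\<^esub> y) \<oplus>\<^bsub>M\<^esub> y = x"
  unfolding a_minus_def by (simp add: M.add.m_assoc M.l_neg)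
lemma mm4: "x \<in> carrier M \<Longrightarrow> y \<in> carrier M \<Longrightarrow> x \<ominus>\<^bsub>M\<^esub> y = \<zero>\<^bsub>M\<^esub> \<Longrightarrow> x = y"
  using mm3 by (metis M.l_zero)
lemma sub_minus: "submodule N R M \<Longrightarrow> a \<in> N \<Longrightarrow> b \<in> N \<Longrightarrow> a \<ominus>\<^bsub>M\<^esub> b \<in> N"
  unfolding a_minus_def by (meson submoduleE(3) submoduleE(5))

lemma hom_minus: assumes N: "module R N" and phi: "mod_hom R M N phi"
  and x: "x \<in> carrier M" and y: "y \<in> carrier M"
  shows "phi (x \<ominus>\<^bsub>M\<^esub> y) = phi x \<ominus>\<^bsub>N\<^esub> phi y"
proof -
  interpret N: module R N by (rule N)
  have pc: "\<And>x. x \<in> carrier M \<Longrightarrow> phi x \<in> carrier N" using phi unfolding mod_hom_def by (auto simp: Pi_iff)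
  have pa: "\<And>x y. x \<in> carrier M \<Longrightarrow> y \<in> carrier M \<Longrightarrow> phi (x \<oplus>\<^bsub>M\<^esub> y) = phi x \<oplus>\<^bsub>N\<^esub> phi y"
    using phi unfolding mod_hom_def by blast
  have ps: "\<And>r x. r \<in> carrier R \<Longrightarrow> x \<in> carrier M \<Longrightarrow> phi (r \<odot>\<^bsub>M\<^esub> x) = r \<odot>\<^bsub>N\<^esub> phi x"
    using phi unfolding mod_hom_def by blast
  have e1: "(\<ominus> \<one>) \<odot>\<^bsub>M\<^esub> y = \<ominus>\<^bsub>M\<^esub> y" using smult_l_minus[of "\<one>" y] y by simp
  have e2: "(\<ominus> \<one>) \<odot>\<^bsub>N\<^esub> phi y = \<ominus>\<^bsub>N\<^esub> phi y" using N.smult_l_minus[of "\<one>" "phi y"] pc[OF y] by simp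
  have "phi (\<ominus>\<^bsub>M\<^esub> y) = \<ominus>\<^bsub>N\<^esub> phi y" using ps[of "\<ominus> \<one>" y] y e1 e2 by simp
  thus ?thesis unfolding a_minus_def using pa x y by simp
qed

end

context pb begin

lemma sep_cyclic:
  fixes S :: "('a \<times> 'b, 's) module" and M :: "('a \<times> 'b, 't) module"
  assumes rep: "sep_rep R R1 R2 P1 P2 S M phi" and Mm: "module R M"
    and m: "m \<in> carrier M" and cy: "carrier M = module.cyc R M m"
  shows "\<exists>s\<in>carrier S. carrier S = module.cyc R S s"
proof -
  have Sm: "module R S" and sep: "separated R R1 R2 P1 P2 S" and hom: "mod_hom R S M phi"
    and surj: "phi ` carrier S = carrier M" using rep unfolding sep_rep_def by blast+
  interpret Sm: module R S by (rule Sm)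
  interpret Mm: module R M by (rule Mm)
  let ?I1 = "{(a, \<zero>\<^bsub>R2\<^esub>) | a. a \<in> P1}"
  let ?I2 = "{(\<zero>\<^bsub>R1\<^esub>, b) | b. b \<in> P2}"
  define A1 where "A1 = ideal_mod_prod ?I1 R S"
  define A2 where "A2 = ideal_mod_prod ?I2 R S"
  define K where "K = {x \<in> carrier S. phi x = \<zero>\<^bsub>M\<^esub>}"
  have A12: "A1 \<inter> A2 = {\<zero>\<^bsub>S\<^esub>}" using sep unfolding separated_def A1_def A2_def by blast
  have A1s: "submodule A1 R S" unfolding A1_def by (rule Sm.imp_sub[OF I1_sub])
  have A2s: "submodule A2 R S" unfolding A2_def by (rule Sm.imp_sub[OF I2_sub])
  have A1c: "A1 \<subseteq> carrier S" and A2c: "A2 \<subseteq> carrier S" using A1s A2s Sm.submoduleE(1) by blast+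
  have Ks: "submodule K R S" unfolding K_def by (rule Sm.kernel_sub[OF Mm hom])
  have Kc: "K \<subseteq> carrier S" unfolding K_def by blast
  have quot: "L = {\<zero>\<^bsub>S\<^esub>}" if L: "submodule L R S" "L \<subseteq> K"
    and H: "\<And>a1 a2. a1 \<in> A1 \<Longrightarrow> a2 \<in> A2 \<Longrightarrow> a1 \<ominus>\<^bsub>S\<^esub> a2 \<in> L \<Longrightarrow> a1 \<in> L" for L
  proof (rule sep_rep_quot[OF rep Mm I1_sub I2_sub L(1)])
    show "\<And>l. l \<in> L \<Longrightarrow> phi l = \<zero>\<^bsub>M\<^esub>" using L(2) unfolding K_def by blast
  qed (use H[unfolded A1_def A2_def] in blast)
  have AK1: "A1 \<inter> K = {\<zero>\<^bsub>S\<^esub>}"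
  proof (rule quot)
    show "submodule (A1 \<inter> K) R S" by (rule Sm.submodule_inter[OF A1s Ks])
    show "A1 \<inter> K \<subseteq> K" by blast
    fix a1 a2 assume a1: "a1 \<in> A1" and a2: "a2 \<in> A2" and l: "a1 \<ominus>\<^bsub>S\<^esub> a2 \<in> A1 \<inter> K"
    have c: "a1 \<in> carrier S" "a2 \<in> carrier S" using a1 a2 A1c A2c by auto
    have "a1 \<ominus>\<^bsub>S\<^esub> (a1 \<ominus>\<^bsub>S\<^esub> a2) \<in> A1" using Sm.sub_minus[OF A1s a1] l by blast
    hence "a2 \<in> A1" using Sm.mm1[OF c] by simp
    hence "a2 = \<zero>\<^bsub>S\<^esub>" using a2 A12 by blast
    thus "a1 \<in> A1 \<inter> K" using l Sm.mm2 c by simp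
  qed
  have AK2: "A2 \<inter> K = {\<zero>\<^bsub>S\<^esub>}"
  proof (rule quot)
    show "submodule (A2 \<inter> K) R S" by (rule Sm.submodule_inter[OF A2s Ks])
    show "A2 \<inter> K \<subseteq> K" by blast
    fix a1 a2 assume a1: "a1 \<in> A1" and a2: "a2 \<in> A2" and l: "a1 \<ominus>\<^bsub>S\<^esub> a2 \<in> A2 \<inter> K"
    have c: "a1 \<in> carrier S" "a2 \<in> carrier S" using a1 a2 A1c A2c by auto
    have "(a1 \<ominus>\<^bsub>S\<^esub> a2) \<oplus>\<^bsub>S\<^esub> a2 \<in> A2" using Sm.submoduleE(5)[OF A2s] l a2 by blast
    hence "a1 \<in> A2" using Sm.mm3[OF c] by simp
    hence "a1 = \<zero>\<^bsub>S\<^esub>" using a1 A12 by blast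
    thus "a1 \<in> A2 \<inter> K" using Sm.sub_zero[OF A2s] Sm.sub_zero[OF Ks] by simp
  qed
  have kill: "q \<odot>\<^bsub>S\<^esub> k = \<zero>\<^bsub>S\<^esub>" if q: "q \<in> carrier R" "fst q \<in> P1" and k: "k \<in> K" for q k
  proof -
    obtain q1 q2 where qq: "q = (q1, q2)" by (cases q)
    have q1: "q1 \<in> P1" using q qq by simp
    have q2: "q2 \<in> P2" using snd_P2 q qq by simp
    have i1: "(q1, \<zero>\<^bsub>R2\<^esub>) \<in> ?I1" using q1 by blast
    have i2: "(\<zero>\<^bsub>R1\<^esub>, q2) \<in> ?I2" using q2 by blast
    have c1: "(q1, \<zero>\<^bsub>R2\<^esub>) \<in> carrier R" using i1 I1_sub by blast
    have c2: "(\<zero>\<^bsub>R1\<^esub>, q2) \<in> carrier R" using i2 I2_sub by blast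
    have kc: "k \<in> carrier S" using k Kc by blast
    have "(q1, \<zero>\<^bsub>R2\<^esub>) \<odot>\<^bsub>S\<^esub> k \<in> A1 \<inter> K"
      using Sm.imp_gen[OF i1 kc] Sm.submoduleE(4)[OF Ks c1 k] unfolding A1_def by blast
    hence z1: "(q1, \<zero>\<^bsub>R2\<^esub>) \<odot>\<^bsub>S\<^esub> k = \<zero>\<^bsub>S\<^esub>" using AK1 by blast
    have "(\<zero>\<^bsub>R1\<^esub>, q2) \<odot>\<^bsub>S\<^esub> k \<in> A2 \<inter> K"
      using Sm.imp_gen[OF i2 kc] Sm.submoduleE(4)[OF Ks c2 k] unfolding A2_def by blast
    hence z2: "(\<zero>\<^bsub>R1\<^esub>, q2) \<odot>\<^bsub>S\<^esub> k = \<zero>\<^bsub>S\<^esub>" using AK2 by blast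
    have "q = (q1, \<zero>\<^bsub>R2\<^esub>) \<oplus>\<^bsub>R\<^esub> (\<zero>\<^bsub>R1\<^esub>, q2)" using P_decomp q qq by simp
    hence "q \<odot>\<^bsub>S\<^esub> k = (q1, \<zero>\<^bsub>R2\<^esub>) \<odot>\<^bsub>S\<^esub> k \<oplus>\<^bsub>S\<^esub> (\<zero>\<^bsub>R1\<^esub>, q2) \<odot>\<^bsub>S\<^esub> k"
      using Sm.smult_l_distr[OF c1 c2 kc] by simp
    thus ?thesis using z1 z2 by simp
  qed
  have "m \<in> phi ` carrier S" using surj m by simp
  then obtain s where s: "s \<in> carrier S" "phi s = m" by blast
  define T where "T = Sm.cyc s"
  have Ts: "submodule T R S" unfolding T_def by (rule Sm.cyc_sub[OF s(1)])
  have Tc: "T \<subseteq> carrier S" using Ts Sm.submoduleE(1) by blast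
  have decomp: "\<exists>r\<in>carrier R. y \<ominus>\<^bsub>S\<^esub> r \<odot>\<^bsub>S\<^esub> s \<in> K" if y: "y \<in> carrier S" for y
  proof -
    have "phi y \<in> carrier M" using hom y unfolding mod_hom_def by (auto simp: Pi_iff)
    then obtain r where r: "r \<in> carrier R" "phi y = r \<odot>\<^bsub>M\<^esub> m" using cy unfolding Mm.cyc_def by blast
    have "phi (y \<ominus>\<^bsub>S\<^esub> r \<odot>\<^bsub>S\<^esub> s) = phi y \<ominus>\<^bsub>M\<^esub> phi (r \<odot>\<^bsub>S\<^esub> s)"
      using Sm.hom_minus[OF Mm hom y] r s by simp
    also have "phi (r \<odot>\<^bsub>S\<^esub> s) = r \<odot>\<^bsub>M\<^esub> m" using hom r s unfolding mod_hom_def by simp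
    finally have "phi (y \<ominus>\<^bsub>S\<^esub> r \<odot>\<^bsub>S\<^esub> s) = r \<odot>\<^bsub>M\<^esub> m \<ominus>\<^bsub>M\<^esub> r \<odot>\<^bsub>M\<^esub> m" using r by simp
    also have "\<dots> = \<zero>\<^bsub>M\<^esub>" unfolding a_minus_def using r m by (intro Mm.M.r_neg) simp
    finally have "phi (y \<ominus>\<^bsub>S\<^esub> r \<odot>\<^bsub>S\<^esub> s) = \<zero>\<^bsub>M\<^esub>" .
    moreover have "y \<ominus>\<^bsub>S\<^esub> r \<odot>\<^bsub>S\<^esub> s \<in> carrier S" using r y s by (simp add: a_minus_def)
    ultimately show ?thesis using r(1) unfolding K_def by blast
  qed
  have PT: "q \<odot>\<^bsub>S\<^esub> y \<in> T" if q: "q \<in> carrier R" "fst q \<in> P1" and y: "y \<in> carrier S" for q y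
  proof -
    obtain r where r: "r \<in> carrier R" "y \<ominus>\<^bsub>S\<^esub> r \<odot>\<^bsub>S\<^esub> s \<in> K" using decomp[OF y] by blast
    have rs: "r \<odot>\<^bsub>S\<^esub> s \<in> carrier S" using r s by simp
    have kc: "y \<ominus>\<^bsub>S\<^esub> r \<odot>\<^bsub>S\<^esub> s \<in> carrier S" using r(2) Kc by blast
    have "q \<odot>\<^bsub>S\<^esub> y = q \<odot>\<^bsub>S\<^esub> ((y \<ominus>\<^bsub>S\<^esub> r \<odot>\<^bsub>S\<^esub> s) \<oplus>\<^bsub>S\<^esub> r \<odot>\<^bsub>S\<^esub> s)"
      using Sm.mm3[OF y rs] by simp
    also have "\<dots> = q \<odot>\<^bsub>S\<^esub> (y \<ominus>\<^bsub>S\<^esub> r \<odot>\<^bsub>S\<^esub> s) \<oplus>\<^bsub>S\<^esub> q \<odot>\<^bsub>S\<^esub> (r \<odot>\<^bsub>S\<^esub> s)"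
      using Sm.smult_r_distr[OF q(1) kc rs] .
    also have "\<dots> = \<zero>\<^bsub>S\<^esub> \<oplus>\<^bsub>S\<^esub> q \<odot>\<^bsub>S\<^esub> (r \<odot>\<^bsub>S\<^esub> s)"
      using kill[OF q r(2)] by simp
    also have "\<dots> = q \<odot>\<^bsub>S\<^esub> (r \<odot>\<^bsub>S\<^esub> s)" using q(1) rs by (intro Sm.M.l_zero) simp
    also have "\<dots> = (q \<otimes>\<^bsub>R\<^esub> r) \<odot>\<^bsub>S\<^esub> s"
      using q(1) r(1) s(1) by (intro Sm.smult_assoc1[symmetric])
    finally show ?thesis unfolding T_def Sm.cyc_def using q r by blast
  qed
  have A1T: "A1 \<subseteq> T" unfolding A1_def
  proof (rule Sm.imp_min[OF Ts])
    fix r y assume r: "r \<in> ?I1" and y: "y \<in> carrier S"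
    then obtain a where a: "r = (a, \<zero>\<^bsub>R2\<^esub>)" "a \<in> P1" by blast
    have "r \<in> carrier R" using r I1_sub by blast
    thus "r \<odot>\<^bsub>S\<^esub> y \<in> T" using PT[of r y] a y by simp
  qed
  have A2T: "A2 \<subseteq> T" unfolding A2_def
  proof (rule Sm.imp_min[OF Ts])
    fix r y assume r: "r \<in> ?I2" and y: "y \<in> carrier S"
    then obtain b where b: "r = (\<zero>\<^bsub>R1\<^esub>, b)" by blast
    have "r \<in> carrier R" using r I2_sub by blast
    thus "r \<odot>\<^bsub>S\<^esub> y \<in> T" using PT[of r y] b y zero_P1 by simp
  qed
  have KT: "K \<subseteq> T"
  proof
    fix k assume k: "k \<in> K"
    show "k \<in> T"
    proof (rule ccontr)
      assume kT: "k \<notin> T"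
      have kc: "k \<in> carrier S" using k Kc by blast
      define L where "L = Sm.cyc k"
      have Ls: "submodule L R S" unfolding L_def by (rule Sm.cyc_sub[OF kc])
      have LK: "L \<subseteq> K" unfolding L_def Sm.cyc_def using Sm.submoduleE(4)[OF Ks] k by blast
      have LT: "x = \<zero>\<^bsub>S\<^esub>" if x: "x \<in> L" "x \<in> T" for x
      proof -
        obtain r where r: "r \<in> carrier R" "x = r \<odot>\<^bsub>S\<^esub> k" using x(1) unfolding L_def Sm.cyc_def by blast
        show ?thesis
        proof (cases "fst r \<in> P1")
          case True thus ?thesis using kill[OF r(1) True k] r by simp
        next
          case False
          hence u: "r \<in> Units R" using unit_or_P[OF r(1)] by blast
          have "inv\<^bsub>R\<^esub> r \<odot>\<^bsub>S\<^esub> x \<in> T" using Sm.submoduleE(4)[OF Ts _ x(2)] u by simp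
          moreover have "inv\<^bsub>R\<^esub> r \<odot>\<^bsub>S\<^esub> x = k"
          proof -
            have "(inv\<^bsub>R\<^esub> r \<otimes>\<^bsub>R\<^esub> r) \<odot>\<^bsub>S\<^esub> k = inv\<^bsub>R\<^esub> r \<odot>\<^bsub>S\<^esub> (r \<odot>\<^bsub>S\<^esub> k)"
              using u kc r by (intro Sm.smult_assoc1) auto
            moreover have "inv\<^bsub>R\<^esub> r \<otimes>\<^bsub>R\<^esub> r = \<one>\<^bsub>R\<^esub>" by (rule R.Units_l_inv[OF u])
            ultimately show ?thesis using r kc by simp
          qed
          ultimately show ?thesis using kT by simp
        qed
      qed
      have "L = {\<zero>\<^bsub>S\<^esub>}"
      proof (rule quot[OF Ls LK])
        fix a1 a2 assume a1: "a1 \<in> A1" and a2: "a2 \<in> A2" and l: "a1 \<ominus>\<^bsub>S\<^esub> a2 \<in> L"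
        have c: "a1 \<in> carrier S" "a2 \<in> carrier S" using a1 a2 A1c A2c by auto
        have "a1 \<ominus>\<^bsub>S\<^esub> a2 \<in> T" using Sm.sub_minus[OF Ts] a1 a2 A1T A2T by blast
        hence "a1 \<ominus>\<^bsub>S\<^esub> a2 = \<zero>\<^bsub>S\<^esub>" using LT l by blast
        hence "a1 = a2" using Sm.mm4[OF c] by blast
        hence "a1 = \<zero>\<^bsub>S\<^esub>" using a1 a2 A12 by blast
        thus "a1 \<in> L" using Sm.sub_zero[OF Ls] by simp
      qed
      hence "k = \<zero>\<^bsub>S\<^esub>" using Sm.cyc_self[OF kc] unfolding L_def by blast
      thus False using kT Sm.sub_zero[OF Ts] by simp
    qed
  qed
  have "carrier S \<subseteq> T"
  proof
    fix y assume y: "y \<in> carrier S"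
    obtain r where r: "r \<in> carrier R" "y \<ominus>\<^bsub>S\<^esub> r \<odot>\<^bsub>S\<^esub> s \<in> K" using decomp[OF y] by blast
    have rs: "r \<odot>\<^bsub>S\<^esub> s \<in> carrier S" using r s by simp
    have "(y \<ominus>\<^bsub>S\<^esub> r \<odot>\<^bsub>S\<^esub> s) \<oplus>\<^bsub>S\<^esub> r \<odot>\<^bsub>S\<^esub> s \<in> T"
      using Sm.submoduleE(5)[OF Ts] r KT unfolding T_def Sm.cyc_def by blast
    thus "y \<in> T" using Sm.mm3[OF y rs] by simp
  qed
  thus ?thesis using Tc s(1) unfolding T_def by blast
qed

end

context module begin

lemma hom_zero: assumes N: "module R N" and phi: "mod_hom R M N phi" shows "phi \<zero>\<^bsub>M\<^esub> = \<zero>\<^bsub>N\<^esub>"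
  using sub_zero[OF kernel_sub[OF N phi]] by simp

lemma preimage_sub: assumes N: "module R N" and phi: "mod_hom R M N phi" and W: "submodule W R N"
  shows "submodule {x \<in> carrier M. phi x \<in> W} R M"
proof -
  interpret N: module R N by (rule N)
  have pc: "\<And>x. x \<in> carrier M \<Longrightarrow> phi x \<in> carrier N" using phi unfolding mod_hom_def by (auto simp: Pi_iff)
  have pa: "\<And>x y. x \<in> carrier M \<Longrightarrow> y \<in> carrier M \<Longrightarrow> phi (x \<oplus>\<^bsub>M\<^esub> y) = phi x \<oplus>\<^bsub>N\<^esub> phi y"
    using phi unfolding mod_hom_def by blast
  have ps: "\<And>r x. r \<in> carrier R \<Longrightarrow> x \<in> carrier M \<Longrightarrow> phi (r \<odot>\<^bsub>M\<^esub> x) = r \<odot>\<^bsub>N\<^esub> phi x"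
    using phi unfolding mod_hom_def by blast
  have hn: "phi (\<ominus>\<^bsub>M\<^esub> x) = \<ominus>\<^bsub>N\<^esub> phi x" if x: "x \<in> carrier M" for x
  proof -
    have "phi (\<zero>\<^bsub>M\<^esub> \<ominus>\<^bsub>M\<^esub> x) = phi \<zero>\<^bsub>M\<^esub> \<ominus>\<^bsub>N\<^esub> phi x" by (rule hom_minus[OF N phi _ x]) simp
    thus ?thesis using x pc[OF x] hom_zero[OF N phi] by (simp add: a_minus_def)
  qed
  show ?thesis
  proof (rule submoduleI)
    show "{x \<in> carrier M. phi x \<in> W} \<subseteq> carrier M" by blast
    show "\<zero>\<^bsub>M\<^esub> \<in> {x \<in> carrier M. phi x \<in> W}" using hom_zero[OF N phi] N.sub_zero[OF W] by simp
    fix a b assume a: "a \<in> {x \<in> carrier M. phi x \<in> W}" and b: "b \<in> {x \<in> carrier M. phi x \<in> W}"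
    show "\<ominus>\<^bsub>M\<^esub> a \<in> {x \<in> carrier M. phi x \<in> W}" using a hn N.submoduleE(3)[OF W] by simp
    show "a \<oplus>\<^bsub>M\<^esub> b \<in> {x \<in> carrier M. phi x \<in> W}" using a b pa N.submoduleE(5)[OF W] by simp
  next
    fix r a assume r: "r \<in> carrier R" and a: "a \<in> {x \<in> carrier M. phi x \<in> W}"
    show "r \<odot>\<^bsub>M\<^esub> a \<in> {x \<in> carrier M. phi x \<in> W}" using r a ps N.submoduleE(4)[OF W] by simp
  qed
qed

lemma pap_quot: assumes N: "module R N" and phi: "mod_hom R M N phi" and surj: "phi ` carrier M = carrier N"
  and pap: "pap_multiplication_module R M"
  shows "pap_multiplication_module R N"
  unfolding pap_multiplication_module_def
proof (intro allI impI)
  interpret N: module R N by (rule N)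
  have pc: "\<And>x. x \<in> carrier M \<Longrightarrow> phi x \<in> carrier N" using phi unfolding mod_hom_def by (auto simp: Pi_iff)
  have ps: "\<And>r x. r \<in> carrier R \<Longrightarrow> x \<in> carrier M \<Longrightarrow> phi (r \<odot>\<^bsub>M\<^esub> x) = r \<odot>\<^bsub>N\<^esub> phi x"
    using phi unfolding mod_hom_def by blast
  fix W assume W: "pseudo_absorbing_primary R N W"
  have Ws: "submodule W R N" and Wne: "W \<noteq> carrier N" and W2: "two_absorbing_primary R (mod_colon R W N)"
    using W unfolding pseudo_absorbing_primary_def by blast+
  have Wc: "W \<subseteq> carrier N" using Ws N.submoduleE(1) by blast
  define W' where "W' = {x \<in> carrier M. phi x \<in> W}"
  have W's: "submodule W' R M" unfolding W'_def by (rule preimage_sub[OF N phi Ws])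
  have W'ne: "W' \<noteq> carrier M"
  proof
    assume "W' = carrier M"
    hence W'M: "\<And>x. x \<in> carrier M \<Longrightarrow> phi x \<in> W" unfolding W'_def by blast
    have "carrier N \<subseteq> W"
    proof
      fix y assume "y \<in> carrier N"
      then obtain x where "x \<in> carrier M" "y = phi x" using surj by (metis imageE)
      thus "y \<in> W" using W'M by simp
    qed
    thus False using Wne Wc by blast
  qed
  have col: "mod_colon R W' M = mod_colon R W N"
  proof -
    have "(\<forall>x\<in>carrier M. r \<odot>\<^bsub>M\<^esub> x \<in> W') \<longleftrightarrow> (\<forall>y\<in>carrier N. r \<odot>\<^bsub>N\<^esub> y \<in> W)" if r: "r \<in> carrier R" for r
    proof
      assume h: "\<forall>x\<in>carrier M. r \<odot>\<^bsub>M\<^esub> x \<in> W'"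
      show "\<forall>y\<in>carrier N. r \<odot>\<^bsub>N\<^esub> y \<in> W"
      proof
        fix y assume "y \<in> carrier N"
        then obtain x where x: "x \<in> carrier M" "y = phi x" using surj by (metis imageE)
        thus "r \<odot>\<^bsub>N\<^esub> y \<in> W" using h ps[OF r x(1)] unfolding W'_def by auto
      qed
    next
      assume h: "\<forall>y\<in>carrier N. r \<odot>\<^bsub>N\<^esub> y \<in> W"
      show "\<forall>x\<in>carrier M. r \<odot>\<^bsub>M\<^esub> x \<in> W'"
        using h ps[OF r] pc r unfolding W'_def by auto
    qed
    thus ?thesis unfolding mod_colon_def by blast
  qed
  have "pseudo_absorbing_primary R M W'" unfolding pseudo_absorbing_primary_def using W's W'ne W2 col by simp
  then obtain I where I: "ideal I R" "W' = ideal_mod_prod I R M" using pap unfolding pap_multiplication_module_def by blast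
  have Ic: "I \<subseteq> carrier R" using I(1) by (meson ideal.Icarr subsetI)
  have "W \<subseteq> ideal_mod_prod I R N"
  proof
    fix w assume w: "w \<in> W"
    then obtain x where x: "x \<in> carrier M" "w = phi x" using surj Wc by (metis imageE subsetD)
    have "ideal_mod_prod I R M \<subseteq> {x \<in> carrier M. phi x \<in> ideal_mod_prod I R N}"
    proof (rule imp_min[OF preimage_sub[OF N phi N.imp_sub[OF Ic]]])
      fix r y assume r: "r \<in> I" and y: "y \<in> carrier M"
      have rc: "r \<in> carrier R" using r Ic by blast
      show "r \<odot>\<^bsub>M\<^esub> y \<in> {x \<in> carrier M. phi x \<in> ideal_mod_prod I R N}"
        using ps[OF rc y] N.imp_gen[OF r pc[OF y]] rc y by simp
    qed
    moreover have "x \<in> W'" using x w unfolding W'_def by simp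
    ultimately show "w \<in> ideal_mod_prod I R N" using I(2) x by auto
  qed
  moreover have "ideal_mod_prod I R N \<subseteq> W"
  proof (rule N.imp_min[OF Ws])
    fix r y assume r: "r \<in> I" and y: "y \<in> carrier N"
    then obtain x where x: "x \<in> carrier M" "y = phi x" using surj by (metis imageE)
    have "r \<odot>\<^bsub>M\<^esub> x \<in> W'" using I(2) imp_gen[OF r x(1)] by simp
    thus "r \<odot>\<^bsub>N\<^esub> y \<in> W" unfolding W'_def using ps r Ic x by auto
  qed
  ultimately show "\<exists>I. ideal I R \<and> W = ideal_mod_prod I R N" using I(1) by blast
qed

end

theorem theorem4p2:
  fixes R1 :: "'a ring" and R2 :: "'b ring" and Rbar :: "'c ring"
    and V1 :: "'a \<Rightarrow> 'c" and V2 :: "'b \<Rightarrow> 'c" and p1 :: 'a and p2 :: 'b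
    and S :: "('a \<times> 'b, 's) module" and M :: "('a \<times> 'b, 'm) module"
    and \<phi> :: "'s \<Rightarrow> 'm"
  defines "P1 \<equiv> PIdl\<^bsub>R1\<^esub> p1" and "P2 \<equiv> PIdl\<^bsub>R2\<^esub> p2"
    and "R \<equiv> pullback_ring R1 R2 V1 V2"
  assumes p1: "p1 \<in> carrier R1" and p2: "p2 \<in> carrier R2"
    and dvr1: "dvr R1 P1" and dvr2: "dvr R2 P2"
    and field: "field Rbar"
    and V1: "V1 \<in> ring_hom R1 Rbar" and V1_surj: "V1 ` carrier R1 = carrier Rbar"
    and V1_ker: "a_kernel R1 Rbar V1 = P1"
    and V2: "V2 \<in> ring_hom R2 Rbar" and V2_surj: "V2 ` carrier R2 = carrier Rbar"
    and V2_ker: "a_kernel R2 Rbar V2 = P2"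
    and M_mod: "module R M"
    and M_nonsep: "\<not> separated R R1 R2 P1 P2 M"
    and rep: "sep_rep R R1 R2 P1 P2 S M \<phi>"
  shows "pap_multiplication_module R M \<longleftrightarrow> pap_multiplication_module R S"
proof -
  have d1: "P1 = PIdl\<^bsub>R1\<^esub> p1" and d2: "P2 = PIdl\<^bsub>R2\<^esub> p2" and d3: "R = pullback_ring R1 R2 V1 V2"
    using assms(1-3) by simp_all
  have cR: "cring R" using M_mod unfolding module_def by blast
  interpret pb R1 R2 Rbar V1 V2 p1 p2 P1 P2 R
    by (rule pb.intro[OF d1 d2 d3 p1 p2 dvr1 dvr2 field V1 V1_ker V2 V2_ker cR])
  interpret Mm: module R M by (rule M_mod)
  have Sm: "module R S" and hom: "mod_hom R S M \<phi>" and surj: "\<phi> ` carrier S = carrier M"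
    using rep unfolding sep_rep_def by blast+
  interpret Sm: module R S by (rule Sm)
  have nz: "carrier M \<noteq> {\<zero>\<^bsub>M\<^esub>}"
  proof
    assume M0: "carrier M = {\<zero>\<^bsub>M\<^esub>}"
    have "ideal_mod_prod {(a, \<zero>\<^bsub>R2\<^esub>) | a. a \<in> P1} R M = {\<zero>\<^bsub>M\<^esub>}"
      using Mm.imp_carrier[OF I1_sub] Mm.imp_zero[OF I1_sub] M0 by blast
    moreover have "ideal_mod_prod {(\<zero>\<^bsub>R1\<^esub>, b) | b. b \<in> P2} R M = {\<zero>\<^bsub>M\<^esub>}"
      using Mm.imp_carrier[OF I2_sub] Mm.imp_zero[OF I2_sub] M0 by blast
    ultimately have "separated R R1 R2 P1 P2 M" unfolding separated_def by simp
    thus False using M_nonsep by blast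
  qed
  show ?thesis
  proof
    assume "pap_multiplication_module R M"
    then obtain m where m: "m \<in> carrier M" "carrier M = Mm.cyc m" using pap_cyclic[OF M_mod nz] by blast
    obtain s where s: "s \<in> carrier S" "carrier S = Sm.cyc s" using sep_cyclic[OF rep M_mod m] by blast
    show "pap_multiplication_module R S" by (rule Sm.cyclic_pap[OF s])
  next
    assume "pap_multiplication_module R S"
    thus "pap_multiplication_module R M" using Sm.pap_quot[OF M_mod hom surj] by blast
  qed
qed

end
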